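(* Let $1<c_1<c_2$ be constants. There are constants $\chi,l>1$ such that for every $p=d/n$ with $c_1<d=d(n)<c_2$, a.a.s. every set $S\subseteq V(H_{n,p})$ inducing a connected subgraph with $\chi\ln n\le|S|\le N$ contains at least $|S|/l$ vertices of $\mathrm{C}(H_{n,p})$.
   Context: $G_{n,p}$ is the random graph on $V_n=\{1,\dots,n\}$ with each possible edge present independently with probability $p$; $H_{n,p}$ is its largest component; a.a.s. means with probability tending to $1$. The core $\mathrm{C}(H_{n,p})$ is the maximal subgraph of $H_{n,p}$ with minimum degree at least $2$, and $N=|V(\mathrm{C}(H_{n,p}))|$. *)

theory Defs
  imports "HOL-Probability.Probability"
begin

definition all_edges :: "nat \<Rightarrow> nat set set" where
  "all_edges n = {e. \<exists>i j. i \<in> {1..n} \<and> j \<in> {1..n} \<and> i \<noteq> j \<and> e = {i, j}}"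

definition Gnp :: "nat \<Rightarrow> real \<Rightarrow> nat set set pmf" where
  "Gnp n p = map_pmf (\<lambda>f. {e \<in> all_edges n. f e})
                     (Pi_pmf (all_edges n) False (\<lambda>_. bernoulli_pmf p))"

definition adj :: "nat set set \<Rightarrow> nat set \<Rightarrow> (nat \<times> nat) set" where
  "adj E W = {(x, y). x \<in> W \<and> y \<in> W \<and> {x, y} \<in> E}"

definition component :: "nat set set \<Rightarrow> nat set \<Rightarrow> nat \<Rightarrow> nat set" where
  "component E V v = {u \<in> V. (v, u) \<in> (adj E V)\<^sup>*}"

definition components :: "nat set set \<Rightarrow> nat set \<Rightarrow> nat set set" where
  "components E V = component E V ` V"

definition is_largest_component :: "nat \<Rightarrow> nat set set \<Rightarrow> nat set \<Rightarrow> bool" where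
  "is_largest_component n E H \<longleftrightarrow>
     H \<in> components E {1..n} \<and> (\<forall>C \<in> components E {1..n}. card C \<le> card H)"

definition induces_connected :: "nat set set \<Rightarrow> nat set \<Rightarrow> bool" where
  "induces_connected E S \<longleftrightarrow> S \<noteq> {} \<and> (\<forall>u \<in> S. \<forall>v \<in> S. (u, v) \<in> (adj E S)\<^sup>*)"

text \<open>Vertex set of the core (2-core) of the subgraph induced on H: the maximal subgraph
  of minimum degree at least 2. Such a maximal subgraph is induced, and its vertex set is
  the union of all W \<subseteq> H in which every vertex has at least 2 neighbours inside W.\<close>
definition core :: "nat set set \<Rightarrow> nat set \<Rightarrow> nat set" where
  "core E H = \<Union>{W. W \<subseteq> H \<and> (\<forall>v \<in> W. card {u \<in> W. {u, v} \<in> E} \<ge> 2)}"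

end

theory Submission
  imports Defs
begin


lemma all_edges_finite: "finite (all_edges n)"
proof -
  have "all_edges n \<subseteq> Pow {1..n}" unfolding all_edges_def by auto
  then show ?thesis by (rule finite_subset) simp
qed

lemma Gnp_event:
  assumes F: "F \<subseteq> all_edges n" and Z: "Z \<subseteq> all_edges n" and FZ: "F \<inter> Z = {}"
    and p: "0 \<le> p" "p \<le> 1"
  shows "measure_pmf.prob (Gnp n p) {E. F \<subseteq> E \<and> E \<inter> Z = {}} = p ^ card F * (1 - p) ^ card Z"
proof -
  define B where "B = (\<lambda>e. if e \<in> F then {True} else if e \<in> Z then {False} else (UNIV::bool set))"
  have "measure_pmf.prob (Gnp n p) {E. F \<subseteq> E \<and> E \<inter> Z = {}}
     = measure_pmf.prob (Pi_pmf (all_edges n) False (\<lambda>_. bernoulli_pmf p))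
         ((\<lambda>f. {e \<in> all_edges n. f e}) -` {E. F \<subseteq> E \<and> E \<inter> Z = {}})"
    unfolding Gnp_def by simp
  also have "(\<lambda>f. {e \<in> all_edges n. f e}) -` {E. F \<subseteq> E \<and> E \<inter> Z = {}} = Pi (all_edges n) B"
    using F Z FZ unfolding B_def Pi_def by auto
  also have "measure_pmf.prob (Pi_pmf (all_edges n) False (\<lambda>_. bernoulli_pmf p)) (Pi (all_edges n) B)
     = (\<Prod>e\<in>all_edges n. measure_pmf.prob (bernoulli_pmf p) (B e))"
    by (rule measure_Pi_pmf_Pi) (rule all_edges_finite)
  also have "\<dots> = (\<Prod>e\<in>F. measure_pmf.prob (bernoulli_pmf p) (B e)) *
        (\<Prod>e\<in>Z. measure_pmf.prob (bernoulli_pmf p) (B e)) *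
        (\<Prod>e\<in>all_edges n - F - Z. measure_pmf.prob (bernoulli_pmf p) (B e))"
  proof -
    have fin: "finite (all_edges n)" by (rule all_edges_finite)
    have "(\<Prod>e\<in>all_edges n. measure_pmf.prob (bernoulli_pmf p) (B e)) =
       (\<Prod>e\<in>all_edges n - (F \<union> Z). measure_pmf.prob (bernoulli_pmf p) (B e)) *
       (\<Prod>e\<in>F \<union> Z. measure_pmf.prob (bernoulli_pmf p) (B e))"
      using fin F Z by (intro prod.subset_diff) auto
    moreover have "all_edges n - (F \<union> Z) = all_edges n - F - Z" by auto
    ultimately have "(\<Prod>e\<in>all_edges n. measure_pmf.prob (bernoulli_pmf p) (B e)) =
       (\<Prod>e\<in>F \<union> Z. measure_pmf.prob (bernoulli_pmf p) (B e)) *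
        (\<Prod>e\<in>all_edges n - F - Z. measure_pmf.prob (bernoulli_pmf p) (B e))"
      by (simp add: mult.commute)
    also have "(\<Prod>e\<in>F \<union> Z. measure_pmf.prob (bernoulli_pmf p) (B e)) =
       (\<Prod>e\<in>F. measure_pmf.prob (bernoulli_pmf p) (B e)) * (\<Prod>e\<in>Z. measure_pmf.prob (bernoulli_pmf p) (B e))"
      using fin F Z FZ by (intro prod.union_disjoint) (auto intro: finite_subset)
    finally show ?thesis .
  qed
  also have "(\<Prod>e\<in>F. measure_pmf.prob (bernoulli_pmf p) (B e)) = p ^ card F"
    using p by (simp add: B_def measure_pmf_single)
  also have "(\<Prod>e\<in>Z. measure_pmf.prob (bernoulli_pmf p) (B e)) = (1 - p) ^ card Z"
    using p FZ by (subst prod.cong[OF refl, where h="\<lambda>_. 1 - p"]) (auto simp: B_def measure_pmf_single)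
  also have "(\<Prod>e\<in>all_edges n - F - Z. measure_pmf.prob (bernoulli_pmf p) (B e)) = 1"
    by (intro prod.neutral) (simp add: B_def)
  finally show ?thesis by simp
qed


lemma ln_1m_bound:
  fixes t :: real assumes "0 \<le> t" "t < 1"
  shows "ln (1 - t) \<le> - t - t^2/2"
proof -
  define g where "g = (\<lambda>s::real. ln (1 - s) + s + s^2/2)"
  have "g t \<le> g 0"
  proof (rule DERIV_nonpos_imp_nonincreasing[OF assms(1)])
    fix x assume x: "0 \<le> x" "x \<le> t"
    then have x1: "x < 1" using assms by simp
    have "DERIV g x :> (- 1 / (1 - x) + 1 + x)"
      unfolding g_def using x1
      by - (rule derivative_eq_intros refl | simp)+
    moreover have "- 1 / (1 - x) + 1 + x \<le> 0"
    proof -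
      have "- 1 / (1 - x) + 1 + x = - (x^2) / (1 - x)" using x1 by (simp add: field_simps power2_eq_square)
      also have "\<dots> \<le> 0" using x1 by (simp add: divide_nonpos_pos)
      finally show ?thesis .
    qed
    ultimately show "\<exists>y. DERIV g x :> y \<and> y \<le> 0" by blast
  qed
  then show ?thesis by (simp add: g_def)
qed

definition Fx :: "real \<Rightarrow> real" where
  "Fx y = - y - y * ln (1 - y/2) - (1 - y) * ln (1 - y)"

lemma Fx_bound_lt1:
  fixes x :: real assumes "0 \<le> x" "x < 1"
  shows "Fx x \<le> - (x^3/24)"
proof -
  define G where "G = (\<lambda>y. Fx y + y^3/24)"
  have "G x \<le> G 0"
  proof (rule DERIV_nonpos_imp_nonincreasing[OF assms(1)])
    fix y assume y: "0 \<le> y" "y \<le> x"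
    then have y1: "y < 1" using assms by simp
    define t where "t = y / (2 - y)"
    have t0: "0 \<le> t" "t < 1" using y y1 by (auto simp: t_def field_simps)
    have "DERIV G y :> (y / (2 - y) + ln (1 - y) - ln (1 - y / 2) + y^2 / 8)"
      unfolding G_def Fx_def using y1
      by - (rule derivative_eq_intros refl | simp)+
    moreover have "y / (2 - y) + ln (1 - y) - ln (1 - y / 2) + y^2 / 8 \<le> 0"
    proof -
      have e1: "ln (1 - t) = ln (1 - y) - ln (1 - y/2)"
      proof -
        have "1 - t = (1 - y) / (1 - y/2)" using y1 by (simp add: t_def field_simps)
        then show ?thesis using y1 by (simp add: ln_div)
      qed
      have "y / (2 - y) + ln (1 - y) - ln (1 - y / 2) + y^2 / 8
          = ln (1 - t) + t + y^2/8" using e1 by (simp add: t_def)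
      also have "\<dots> \<le> - (t^2/2) + y^2/8" using ln_1m_bound[OF t0] by simp
      also have "\<dots> \<le> 0"
      proof -
        have "y/2 \<le> t" using y y1 by (simp add: t_def field_simps)
        then have "(y/2)^2 \<le> t^2" using y by (intro power_mono) auto
        then show ?thesis by (simp add: power2_eq_square field_simps)
      qed
      finally show ?thesis .
    qed
    ultimately show "\<exists>d. DERIV G y :> d \<and> d \<le> 0" by blast
  qed
  then show ?thesis by (simp add: G_def Fx_def)
qed

lemma ln2_bound: "ln (2::real) \<le> 23/24"
proof -
  have "(2::real) \<le> (1 + 23/48)^2" by (simp add: power2_eq_square)
  also have "\<dots> \<le> exp (23/48) ^ 2" by (intro power_mono exp_ge_add_one_self) auto
  also have "\<dots> = exp (23/24)" by (simp add: power2_eq_square flip: exp_add)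
  finally show ?thesis by (metis exp_gt_zero ln_exp ln_le_cancel_iff zero_less_numeral)
qed

lemma Fx_bound:
  fixes x :: real assumes "0 \<le> x" "x \<le> 1"
  shows "Fx x \<le> - (x^3/24)"
proof (cases "x < 1")
  case True then show ?thesis using Fx_bound_lt1 assms by simp
next
  case False
  then have "x = 1" using assms by simp
  then show ?thesis using ln2_bound by (simp add: Fx_def ln_div)
qed


definition psi :: "real \<Rightarrow> real" where "psi t = t - 1 - ln t"

lemma psi_nonneg: "0 < t \<Longrightarrow> 0 \<le> psi t"
  using ln_le_minus_one[of t] by (simp add: psi_def)

lemma psi_mono: assumes "1 \<le> a" "a \<le> b" shows "psi a \<le> psi b"
proof -
  have "ln (b / a) \<le> b / a - 1" using assms by (intro ln_le_minus_one) auto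
  also have "b / a - 1 = (b - a) / a" using assms by (simp add: field_simps)
  also have "\<dots> \<le> b - a" using assms by (simp add: divide_le_eq mult_le_cancel_left1)
  finally have "ln b - ln a \<le> b - a" using assms by (simp add: ln_div)
  then show ?thesis by (simp add: psi_def)
qed

lemma psi_pos: "1 < t \<Longrightarrow> 0 < psi t"
proof -
  assume t: "1 < t"
  have "ln t < t - 1"
  proof -
    have "ln t = 2 * ln (sqrt t)" using t by (simp add: ln_sqrt)
    also have "\<dots> \<le> 2 * (sqrt t - 1)" using ln_le_minus_one[of "sqrt t"] t by simp
    also have "\<dots> < t - 1"
    proof -
      have "sqrt t \<noteq> 1" using t by simp
      then have "0 < (sqrt t - 1)^2" by simp
      then have "0 < t - 2 * sqrt t + 1" using t by (simp add: power2_eq_square algebra_simps)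
      then show ?thesis by simp
    qed
    finally show ?thesis .
  qed
  then show ?thesis by (simp add: psi_def)
qed

definition gam :: "real \<Rightarrow> real" where
  "gam c1 = min (psi ((c1 + 1)/2)) ((1 - 1/c1)^2/24)"

lemma gam_pos: "1 < c1 \<Longrightarrow> 0 < gam c1"
  unfolding gam_def using psi_pos[of "(c1+1)/2"] by (auto simp: field_simps)

lemma gam_le: "1 < c1 \<Longrightarrow> gam c1 \<le> 1/24"
proof -
  assume c: "1 < c1"
  have "(1 - 1/c1)^2 \<le> 1" using c by (intro power_le_one) (auto simp: field_simps)
  then show ?thesis unfolding gam_def by simp
qed

lemma f_bound:
  fixes x c c1 :: real
  assumes c: "1 < c1" "c1 \<le> c" and x: "0 < x" "x \<le> 1"
  shows "x * ln c - c * x * (1 - x/2) - (1 - x) * ln (1 - x) \<le> - (gam c1 * x)"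
proof -
  define u where "u = 1 - x/2"
  have u: "1/2 \<le> u" "u < 1" "0 < u" using x by (auto simp: u_def)
  have cu: "0 < c * u" using u c by simp
  have l: "ln (c*u) = ln c + ln u" using c u by (simp add: ln_mult)
  have eq: "x * ln c - c * x * (1 - x/2) - (1 - x) * ln (1 - x) = Fx x - x * psi (c * u)"
    unfolding Fx_def psi_def l unfolding u_def by (simp add: algebra_simps)
  show ?thesis
  proof (cases "x \<le> 1 - 1/c1")
    case True
    have "(c1 + 1) / 2 \<le> c * u"
    proof -
      have "(c1 + 1)/2 = c1 * (1 - (1 - 1/c1)/2)" using c by (simp add: field_simps)
      also have "\<dots> \<le> c * u" using True c u unfolding u_def
        by (intro mult_mono) (auto simp: field_simps)
      finally show ?thesis .
    qed
    then have "psi ((c1+1)/2) \<le> psi (c * u)" using c by (intro psi_mono) auto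
    then have g: "gam c1 \<le> psi (c * u)" unfolding gam_def by simp
    have "Fx x \<le> - (x^3/24)" using Fx_bound[of x] x by simp
    moreover have "0 \<le> x^3" using x by simp
    ultimately have "Fx x \<le> 0" by linarith
    moreover have "x * gam c1 \<le> x * psi (c * u)" using g x by (intro mult_left_mono) auto
    ultimately show ?thesis using eq by (simp add: mult.commute)
  next
    case False
    then have x0: "1 - 1/c1 < x" by simp
    have pos: "0 \<le> 1 - 1/c1" using c by (simp add: field_simps)
    have "(1 - 1/c1)^2 \<le> x^2" using x0 pos by (intro power_mono) auto
    then have "x * ((1 - 1/c1)^2/24) \<le> x^3/24" using x
      by (simp add: power3_eq_cube power2_eq_square mult_left_mono)
    then have "x * gam c1 \<le> x^3/24" unfolding gam_def using x
      by (smt (verit) min.cobounded2 mult_left_mono)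
    moreover have "Fx x \<le> - (x^3/24)" using Fx_bound[of x] x by simp
    moreover have "0 \<le> x * psi (c * u)" using psi_nonneg[OF cu] x by simp
    ultimately show ?thesis using eq by (simp add: algebra_simps)
  qed
qed

lemma binom_entropy:
  fixes n m :: nat assumes "0 < m" "m \<le> n"
  shows "real (n choose m) * (real m / real n) ^ m \<le> exp (- (real (n - m) * ln (1 - real m / real n)))"
proof (cases "m = n")
  case True then show ?thesis using assms by simp
next
  case False
  define x where "x = real m / real n"
  have x: "0 < x" "x < 1" using assms False by (auto simp: x_def field_simps)
  have sum1: "(\<Sum>k\<le>n. real (n choose k) * x ^ k * (1 - x) ^ (n - k)) = 1"
    using binomial_ring[of x "1 - x" n] by simp
  have "real (n choose m) * x ^ m * (1 - x) ^ (n - m) \<le> (\<Sum>k\<le>n. real (n choose k) * x ^ k * (1 - x) ^ (n - k))"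
    using assms x by (intro member_le_sum) auto
  then have le1: "real (n choose m) * x ^ m * (1 - x) ^ (n - m) \<le> 1" using sum1 by simp
  have ex: "exp (ln (1 - x)) = 1 - x" using x by simp
  have "(1 - x) ^ (n - m) = exp (real (n - m) * ln (1 - x))"
    by (simp add: exp_of_nat_mult ex)
  then have "real (n choose m) * x ^ m \<le> 1 / exp (real (n - m) * ln (1 - x))"
    using le1 by (simp add: field_simps)
  then show ?thesis by (simp add: x_def exp_minus inverse_eq_divide)
qed


lemma neg_ln_le: assumes "0 < t" shows "- (t * ln t) \<le> 2 * sqrt t"
proof -
  have st: "0 < sqrt t" using assms by simp
  have "ln (1 / sqrt t) \<le> 1 / sqrt t - 1" using st by (intro ln_le_minus_one) simp
  moreover have "ln (1 / sqrt t) = - ln t / 2" using assms by (simp add: ln_div ln_sqrt)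
  ultimately have "- ln t \<le> 2 / sqrt t" by simp
  then have "t * (- ln t) \<le> t * (2 / sqrt t)" using assms by (intro mult_left_mono) auto
  also have "t * (2 / sqrt t) = 2 * sqrt t" using assms
    by (metis divide_inverse mult.commute mult.left_commute real_div_sqrt order_less_le)
  finally show ?thesis by simp
qed

lemma card_small_subsets:
  fixes X :: "'a set" and th :: real
  assumes fin: "finite X" and th: "0 < th" "th \<le> 1"
  shows "real (card {D. D \<subseteq> X \<and> real (card D) \<le> th * real (card X)}) \<le> exp (real (card X) * (th + 2 * sqrt th))"
proof -
  define m where "m = card X"
  define I where "I = {a. a \<le> m \<and> real a \<le> th * real m}"
  have sub: "{D. D \<subseteq> X \<and> real (card D) \<le> th * real (card X)} \<subseteq> (\<Union>a\<in>I. {D. D \<subseteq> X \<and> card D = a})"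
    using fin by (auto simp: I_def m_def intro: card_mono)
  have finI: "finite I" by (simp add: I_def)
  have "card {D. D \<subseteq> X \<and> real (card D) \<le> th * real (card X)} \<le> card (\<Union>a\<in>I. {D. D \<subseteq> X \<and> card D = a})"
    using fin finI by (intro card_mono[OF _ sub]) auto
  also have "\<dots> \<le> (\<Sum>a\<in>I. card {D. D \<subseteq> X \<and> card D = a})" by (rule card_UN_le[OF finI])
  also have "\<dots> = (\<Sum>a\<in>I. m choose a)" using fin by (simp add: n_subsets m_def)
  finally have c1: "real (card {D. D \<subseteq> X \<and> real (card D) \<le> th * real (card X)}) \<le> (\<Sum>a\<in>I. real (m choose a))"
    by (metis of_nat_le_iff of_nat_sum)
  have "(\<Sum>a\<in>I. real (m choose a)) \<le> (\<Sum>a\<in>I. real (m choose a) * th ^ a / exp (th * m * ln th))"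
  proof (intro sum_mono)
    fix a assume a: "a \<in> I"
    have "exp (th * m * ln th) \<le> exp (a * ln th)"
    proof -
      have "ln th \<le> 0" using th by simp
      then have "(th * m) * ln th \<le> a * ln th" using a by (intro mult_right_mono_neg) (auto simp: I_def)
      then show ?thesis by simp
    qed
    also have "exp (a * ln th) = th ^ a" using th by (simp add: exp_of_nat_mult)
    finally have "exp (th * m * ln th) \<le> th ^ a" .
    then have "1 \<le> th ^ a / exp (th * m * ln th)" by simp
    then show "real (m choose a) \<le> real (m choose a) * th ^ a / exp (th * m * ln th)"
      by (metis mult_le_cancel_left1 of_nat_0_le_iff times_divide_eq_right order_le_less not_le)
  qed
  also have "\<dots> \<le> (\<Sum>a\<le>m. real (m choose a) * th ^ a / exp (th * m * ln th))"
    using th by (intro sum_mono2) (auto simp: I_def)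
  also have "\<dots> = (\<Sum>a\<le>m. real (m choose a) * th ^ a * 1 ^ (m - a)) / exp (th * m * ln th)"
    by (simp add: sum_divide_distrib)
  also have "(\<Sum>a\<le>m. real (m choose a) * th ^ a * 1 ^ (m - a)) = (th + 1) ^ m"
    by (simp add: binomial_ring)
  also have "(th + 1) ^ m \<le> exp th ^ m"
    using th by (intro power_mono) (auto simp: add.commute)
  also have "exp th ^ m = exp (m * th)" by (simp add: exp_of_nat_mult)
  also have "exp (m * th) / exp (th * m * ln th) = exp (m * th - m * (th * ln th))"
    by (simp add: exp_diff algebra_simps)
  also have "\<dots> \<le> exp (m * th + m * (2 * sqrt th))"
  proof -
    have "- (th * ln th) \<le> 2 * sqrt th" using neg_ln_le th by simp
    then have "m * (- (th * ln th)) \<le> m * (2 * sqrt th)" by (intro mult_left_mono) auto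
    then show ?thesis by simp
  qed
  also have "m * th + m * (2 * sqrt th) = card X * (th + 2 * sqrt th)"
    by (simp add: m_def algebra_simps)
  finally show ?thesis using c1 by (smt (verit) divide_right_mono exp_gt_zero)
qed


lemma term_bound:
  fixes n m :: nat and c c1 th :: real
  assumes m: "1 \<le> m" "m \<le> n" and c: "1 < c1" "c1 \<le> c" and th: "0 < th"
  shows "exp (m * (th + 2 * sqrt th)) * (real m ^ m * (c / n) ^ (m - 1)) * real (n choose m)
          * exp (- (c / n) * (m * n - m^2/2 - m/2 - th * m * n - m))
        \<le> (n / c) * exp (2 * c) * exp (m * (th + 2 * sqrt th + c * th - gam c1))"
proof -
  define x where "x = real m / real n"
  have n0: "0 < real n" using m by simp
  have x: "0 < x" "x \<le> 1" using m by (auto simp: x_def field_simps)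
  have cpos: "0 < c" using c by simp
  have e1: "real m ^ m * (c / n) ^ (m - 1) = (n / c) * (c ^ m * x ^ m)"
  proof -
    have "real m ^ m * (c / n) ^ (m - 1) * (c / n) = real m ^ m * (c / n) ^ m"
      using m by (cases m) (simp_all add: power_Suc2 mult.assoc)
    also have "\<dots> = c ^ m * x ^ m" by (simp add: x_def power_divide field_simps)
    finally have "real m ^ m * (c / n) ^ (m - 1) * (c / n) = c ^ m * x ^ m" .
    then show ?thesis using n0 cpos by (simp add: field_simps)
  qed
  have b: "real (n choose m) * x ^ m \<le> exp (- (real (n - m) * ln (1 - x)))"
    using binom_entropy[of m n] m by (simp add: x_def)
  have cm: "c ^ m = exp (m * ln c)" using cpos by (simp add: exp_of_nat_mult)
  have ex: "- (c / n) * (m * n - m^2/2 - m/2 - th * m * n - m) = - c * m + c * m * x / 2 + c * x / 2 + c * th * m + c * x"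
    using n0 by (simp add: x_def field_simps power2_eq_square)
  have fb: "x * ln c - c * x * (1 - x/2) - (1 - x) * ln (1 - x) \<le> - (gam c1 * x)"
    by (rule f_bound[OF c x])
  have nf: "m * ln c - c * m + c * m * x / 2 - real (n - m) * ln (1 - x) \<le> - (gam c1 * m)"
  proof -
    have nx: "n * x = m" using n0 by (simp add: x_def)
    have n1x: "n * (1 - x) = real (n - m)" using nx m by (simp add: of_nat_diff right_diff_distrib)
    have "n * (x * ln c - c * x * (1 - x/2) - (1 - x) * ln (1 - x))
        = (n * x) * ln c - c * (n * x) * (1 - x/2) - (n * (1 - x)) * ln (1 - x)"
      by (simp add: algebra_simps)
    also have "\<dots> = m * ln c - c * m + c * m * x / 2 - real (n - m) * ln (1 - x)"
      unfolding nx n1x by (simp add: algebra_simps)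
    finally have "m * ln c - c * m + c * m * x / 2 - real (n - m) * ln (1 - x)
        = n * (x * ln c - c * x * (1 - x/2) - (1 - x) * ln (1 - x))" by simp
    also have "\<dots> \<le> n * (- (gam c1 * x))" using fb n0 by (intro mult_left_mono) auto
    also have "\<dots> = - (gam c1 * m)" using n0 by (simp add: x_def)
    finally show ?thesis .
  qed
  have "c * x \<le> c" using x cpos by (intro mult_left_le) auto
  then have cx: "c * x / 2 + c * x \<le> 2 * c" using cpos by linarith
  have "exp (m * (th + 2 * sqrt th)) * (real m ^ m * (c / n) ^ (m - 1)) * real (n choose m)
          * exp (- (c / n) * (m * n - m^2/2 - m/2 - th * m * n - m))
      = (n / c) * exp (m * (th + 2 * sqrt th)) * exp (m * ln c) * (real (n choose m) * x ^ m)
          * exp (- c * m + c * m * x / 2 + c * x / 2 + c * th * m + c * x)"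
    unfolding e1 ex cm by (simp only: mult_ac)
  also have "\<dots> \<le> (n / c) * exp (m * (th + 2 * sqrt th)) * exp (m * ln c) * exp (- (real (n - m) * ln (1 - x)))
          * exp (- c * m + c * m * x / 2 + c * x / 2 + c * th * m + c * x)"
    using b n0 cpos by (intro mult_right_mono mult_left_mono) auto
  also have "\<dots> = (n / c) * exp (m * (th + 2 * sqrt th) + (m * ln c - c * m + c * m * x / 2 - real (n - m) * ln (1 - x))
          + c * th * m + (c * x / 2 + c * x))"
    by (simp add: exp_add[symmetric] algebra_simps)
  also have "\<dots> \<le> (n / c) * exp (m * (th + 2 * sqrt th) + (- (gam c1 * m)) + c * th * m + 2 * c)"
  proof -
    have expo: "m * (th + 2 * sqrt th) + (m * ln c - c * m + c * m * x / 2 - real (n - m) * ln (1 - x))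
          + c * th * m + (c * x / 2 + c * x) \<le> m * (th + 2 * sqrt th) + (- (gam c1 * m)) + c * th * m + 2 * c"
      using nf cx by linarith
    show ?thesis
      apply (rule mult_left_mono)
       apply (simp only: exp_le_cancel_iff)
       apply (rule expo)
      using n0 cpos by simp
  qed
  also have "\<dots> = (n / c) * exp (2 * c) * exp (m * (th + 2 * sqrt th + c * th - gam c1))"
    by (simp add: exp_add[symmetric] algebra_simps)
  finally show ?thesis .
qed


lemma adj_sym: "(a, b) \<in> adj E Q \<Longrightarrow> (b, a) \<in> adj E Q"
  by (auto simp: adj_def insert_commute)

lemma adj_conv: "(adj E Q)\<inverse> = adj E Q"
  using adj_sym by auto

lemma adj_rtrancl_sym: "(a, b) \<in> (adj E Q)\<^sup>* \<Longrightarrow> (b, a) \<in> (adj E Q)\<^sup>*"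
  by (metis adj_conv rtrancl_converseI)

lemma adj_mono: "Q \<subseteq> Q' \<Longrightarrow> adj E Q \<subseteq> adj E Q'"
  by (auto simp: adj_def)

lemma bfs_tree:
  assumes fin: "finite X" and r: "r \<in> X" and conn: "\<forall>z\<in>X. (r, z) \<in> (adj E X)\<^sup>*"
  shows "\<exists>dist par. (\<forall>z\<in>X. (r, z) \<in> (adj E X) ^^ dist z) \<and>
           (\<forall>z\<in>X. \<forall>k. (r, z) \<in> (adj E X) ^^ k \<longrightarrow> dist z \<le> k) \<and>
           (\<forall>z\<in>X - {r}. (par z, z) \<in> adj E X \<and> dist (par z) < dist z)"
proof -
  define R where "R = adj E X"
  define dist where "dist z = (LEAST k. (r, z) \<in> R ^^ k)" for z
  have d1: "(r, z) \<in> R ^^ dist z" if z: "z \<in> X" for z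
  proof -
    obtain k where "(r, z) \<in> R ^^ k" using conn z by (auto simp: R_def rtrancl_power)
    then show ?thesis unfolding dist_def by (rule LeastI)
  qed
  have d2: "dist z \<le> k" if "(r, z) \<in> R ^^ k" for z k
    unfolding dist_def using that by (rule Least_le)
  have ex: "\<exists>u. (r, u) \<in> R ^^ (dist z - 1) \<and> (u, z) \<in> R" if "z \<in> X - {r}" for z
  proof -
    have "dist z \<noteq> 0"
    proof
      assume "dist z = 0"
      then have "(r, z) \<in> R ^^ 0" using d1[of z] that by simp
      then show False using that by simp
    qed
    then obtain k where k: "dist z = Suc k" by (cases "dist z") auto
    then have "(r, z) \<in> R ^^ Suc k" using d1[of z] that by auto
    then show ?thesis using k by auto
  qed
  define par where "par z = (SOME u. (r, u) \<in> R ^^ (dist z - 1) \<and> (u, z) \<in> R)" for z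
  have p: "(r, par z) \<in> R ^^ (dist z - 1) \<and> (par z, z) \<in> R" if "z \<in> X - {r}" for z
    unfolding par_def using ex[OF that] by (rule someI_ex)
  have "dist (par z) < dist z" if "z \<in> X - {r}" for z
  proof -
    have "dist (par z) \<le> dist z - 1" using p[OF that] d2 by blast
    moreover have "dist z \<noteq> 0"
    proof
      assume "dist z = 0"
      then have "(r, z) \<in> R ^^ 0" using d1[of z] that by simp
      then show False using that by simp
    qed
    ultimately show ?thesis by simp
  qed
  then show ?thesis using d1 d2 p unfolding R_def by blast
qed


lemma all_edges_two: "e \<in> all_edges n \<Longrightarrow> \<exists>i j. i \<noteq> j \<and> e = {i, j} \<and> i \<in> {1..n} \<and> j \<in> {1..n}"
  by (auto simp: all_edges_def)

lemma all_edges_noloop: "{u, u} \<notin> all_edges n"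
  by (auto simp: all_edges_def doubleton_eq_iff)

lemma all_edges_mem: "{u, y} \<in> all_edges n \<Longrightarrow> y \<in> {1..n} \<and> u \<in> {1..n} \<and> u \<noteq> y"
  by (auto simp: all_edges_def doubleton_eq_iff)

locale pend =
  fixes n :: nat and E :: "nat set set" and H :: "nat set"
  assumes Esub: "E \<subseteq> all_edges n"
  and Hcomp: "H \<in> components E {1..n}"
begin

definition "C = core E H"
definition "P = H - C"

lemma H_sub: "H \<subseteq> {1..n}"
  using Hcomp by (auto simp: components_def component_def)

lemma finH: "finite H" using H_sub finite_subset by blast

lemma edge_mem: "{u, y} \<in> E \<Longrightarrow> y \<in> {1..n} \<and> u \<in> {1..n} \<and> u \<noteq> y"
  using Esub all_edges_mem by blast

lemma H_closed: assumes "u \<in> H" "{u, y} \<in> E" shows "y \<in> H"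
proof -
  obtain v where v: "v \<in> {1..n}" "H = component E {1..n} v" using Hcomp by (auto simp: components_def)
  have "(v, u) \<in> (adj E {1..n})\<^sup>*" using assms v by (auto simp: component_def)
  moreover have "(u, y) \<in> adj E {1..n}" using assms edge_mem v by (auto simp: adj_def component_def)
  ultimately have "(v, y) \<in> (adj E {1..n})\<^sup>*" by simp
  then show ?thesis using v edge_mem[OF assms(2)] by (auto simp: component_def)
qed

lemma C_sub: "C \<subseteq> H" unfolding C_def core_def by auto

lemma finC: "finite C" using C_sub finH finite_subset by blast

lemma C_deg: assumes "v \<in> C" shows "2 \<le> card {u \<in> C. {u, v} \<in> E}"
proof -
  obtain W where W: "W \<subseteq> H" "\<forall>v\<in>W. 2 \<le> card {u \<in> W. {u, v} \<in> E}" "v \<in> W"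
    using assms unfolding C_def core_def by auto
  have "W \<subseteq> C" using W unfolding C_def core_def by auto
  then have "{u \<in> W. {u, v} \<in> E} \<subseteq> {u \<in> C. {u, v} \<in> E}" by auto
  then have "card {u \<in> W. {u, v} \<in> E} \<le> card {u \<in> C. {u, v} \<in> E}"
    using finC by (intro card_mono) auto
  then show ?thesis using W by auto
qed

lemma C_max: assumes "W \<subseteq> H" "\<forall>v\<in>W. 2 \<le> card {u \<in> W. {u, v} \<in> E}" shows "W \<subseteq> C"
  using assms unfolding C_def core_def by auto

lemma degenerate:
  assumes Y: "Y \<subseteq> P" "Y \<noteq> {}"
  shows "\<exists>v\<in>Y. card {u \<in> Y \<union> C. {u, v} \<in> E} < 2"
proof (rule ccontr)
  assume "\<not> ?thesis"
  then have all: "\<forall>v\<in>Y. 2 \<le> card {u \<in> Y \<union> C. {u, v} \<in> E}" by auto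
  have fin: "finite (Y \<union> C)" using Y finC finH by (auto simp: P_def intro: finite_subset)
  have "\<forall>v\<in>Y \<union> C. 2 \<le> card {u \<in> Y \<union> C. {u, v} \<in> E}"
  proof
    fix v assume v: "v \<in> Y \<union> C"
    show "2 \<le> card {u \<in> Y \<union> C. {u, v} \<in> E}"
    proof (cases "v \<in> Y")
      case True then show ?thesis using all by auto
    next
      case False
      then have "v \<in> C" using v by auto
      then have "2 \<le> card {u \<in> C. {u, v} \<in> E}" by (rule C_deg)
      also have "\<dots> \<le> card {u \<in> Y \<union> C. {u, v} \<in> E}" using fin by (intro card_mono) auto
      finally show ?thesis .
    qed
  qed
  moreover have "Y \<union> C \<subseteq> H" using Y C_sub by (auto simp: P_def)
  ultimately have "Y \<union> C \<subseteq> C" by (intro C_max) auto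
  then show False using Y by (auto simp: P_def)
qed

lemma finP: "finite P" using finH by (simp add: P_def)

lemma rank_exists_aux:
  "Y \<subseteq> P \<Longrightarrow> \<exists>rk::nat\<Rightarrow>nat. inj_on rk Y \<and>
     (\<forall>u\<in>Y. card {y. (y \<in> C \<or> (y \<in> Y \<and> rk y > rk u)) \<and> {u, y} \<in> E} \<le> 1)"
proof (induction "card Y" arbitrary: Y)
  case 0
  have "finite Y" using 0 finP finite_subset by blast
  then have "Y = {}" using 0 by simp
  then show ?case by auto
next
  case (Suc k)
  then have Yne: "Y \<noteq> {}" by auto
  obtain v where v: "v \<in> Y" "card {u \<in> Y \<union> C. {u, v} \<in> E} < 2"
    using degenerate[OF Suc.prems Yne] by auto
  have finY: "finite Y" using Suc.prems finP by (auto intro: finite_subset)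
  have "card (Y - {v}) = k" using Suc.hyps(2) v finY by simp
  moreover have "Y - {v} \<subseteq> P" using Suc.prems by auto
  ultimately have "\<exists>rk'::nat\<Rightarrow>nat. inj_on rk' (Y - {v}) \<and>
    (\<forall>u\<in>Y - {v}. card {y. (y \<in> C \<or> (y \<in> Y - {v} \<and> rk' y > rk' u)) \<and> {u, y} \<in> E} \<le> 1)"
    using Suc.hyps(1)[of "Y - {v}"] by simp
  then obtain rk' :: "nat \<Rightarrow> nat" where rk': "inj_on rk' (Y - {v})"
    "\<forall>u\<in>Y - {v}. card {y. (y \<in> C \<or> (y \<in> Y - {v} \<and> rk' y > rk' u)) \<and> {u, y} \<in> E} \<le> 1"
    by blast
  define rk where "rk u = (if u = v then 0 else Suc (rk' u))" for u
  have "inj_on rk Y" using rk'(1) by (auto simp: inj_on_def rk_def split: if_splits)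
  moreover have "\<forall>u\<in>Y. card {y. (y \<in> C \<or> (y \<in> Y \<and> rk y > rk u)) \<and> {u, y} \<in> E} \<le> 1"
  proof
    fix u assume u: "u \<in> Y"
    show "card {y. (y \<in> C \<or> (y \<in> Y \<and> rk y > rk u)) \<and> {u, y} \<in> E} \<le> 1"
    proof (cases "u = v")
      case True
      have fin: "finite {u \<in> Y \<union> C. {u, v} \<in> E}" using finY finC by auto
      have "{y. (y \<in> C \<or> (y \<in> Y \<and> rk y > rk u)) \<and> {u, y} \<in> E} \<subseteq> {u \<in> Y \<union> C. {u, v} \<in> E}"
        using True by (auto simp: insert_commute)
      then have "card {y. (y \<in> C \<or> (y \<in> Y \<and> rk y > rk u)) \<and> {u, y} \<in> E} \<le> card {u \<in> Y \<union> C. {u, v} \<in> E}"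
        using fin by (intro card_mono) auto
      then show ?thesis using v by simp
    next
      case False
      have "{y. (y \<in> C \<or> (y \<in> Y \<and> rk y > rk u)) \<and> {u, y} \<in> E} =
            {y. (y \<in> C \<or> (y \<in> Y - {v} \<and> rk' y > rk' u)) \<and> {u, y} \<in> E}"
        using False by (auto simp: rk_def)
      then show ?thesis using rk'(2) u False by auto
    qed
  qed
  ultimately show ?case by blast
qed

end

locale pend_rk = pend +
  fixes rk :: "nat \<Rightarrow> nat"
  assumes rk_inj: "inj_on rk P"
  and rk_card: "\<forall>u\<in>P. card {y. (y \<in> C \<or> (y \<in> P \<and> rk y > rk u)) \<and> {u, y} \<in> E} \<le> 1"
begin

definition "L u = {y. (y \<in> C \<or> (y \<in> P \<and> rk y > rk u)) \<and> {u, y} \<in> E}"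
definition "hp u \<longleftrightarrow> L u \<noteq> {}"
definition "pp u = (THE y. y \<in> L u)"

lemma L_unique: assumes "u \<in> P" "y \<in> L u" "y' \<in> L u" shows "y = y'"
proof -
  have fin: "finite (L u)"
  proof -
    have "L u \<subseteq> {1..n}" using edge_mem by (auto simp: L_def)
    then show ?thesis using finite_subset by blast
  qed
  have "card (L u) \<le> 1" using rk_card assms(1) by (simp add: L_def)
  then show ?thesis using assms card_le_Suc0_iff_eq[OF fin] by auto
qed

lemma pp_L: assumes "u \<in> P" "hp u" shows "pp u \<in> L u"
proof -
  obtain y where y: "y \<in> L u" using assms by (auto simp: hp_def)
  have "(THE y. y \<in> L u) = y" using y L_unique[OF assms(1)] by (intro the_equality) auto
  then show ?thesis using y by (simp add: pp_def)
qed

lemma pp_eq: assumes "u \<in> P" "y \<in> L u" shows "hp u \<and> pp u = y"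
  using assms pp_L L_unique hp_def by blast

lemma pp_props: assumes "u \<in> P" "hp u"
  shows "{u, pp u} \<in> E" "pp u \<in> C \<or> (pp u \<in> P \<and> rk (pp u) > rk u)" "pp u \<in> H" "pp u \<noteq> u"
proof -
  have l: "pp u \<in> L u" using pp_L[OF assms] .
  then show "{u, pp u} \<in> E" "pp u \<in> C \<or> (pp u \<in> P \<and> rk (pp u) > rk u)" by (auto simp: L_def)
  then show "pp u \<in> H" using C_sub by (auto simp: P_def)
  show "pp u \<noteq> u" using edge_mem[OF \<open>{u, pp u} \<in> E\<close>] by auto
qed

lemma nbr:
  assumes u: "u \<in> P" and e: "{u, y} \<in> E"
  shows "(hp u \<and> y = pp u) \<or> (y \<in> P \<and> hp y \<and> pp y = u)"
proof -
  have yH: "y \<in> H" using H_closed e u by (auto simp: P_def)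
  have yu: "y \<noteq> u" using edge_mem[OF e] by auto
  show ?thesis
  proof (cases "y \<in> C")
    case True
    then have "y \<in> L u" using e by (simp add: L_def)
    then show ?thesis using pp_eq[OF u] by auto
  next
    case False
    then have yP: "y \<in> P" using yH by (simp add: P_def)
    have "rk y \<noteq> rk u" using rk_inj yP u yu by (auto simp: inj_on_def)
    then consider "rk y > rk u" | "rk y < rk u" by linarith
    then show ?thesis
    proof cases
      case 1
      then have "y \<in> L u" using e yP by (simp add: L_def)
      then show ?thesis using pp_eq[OF u] by auto
    next
      case 2
      then have "u \<in> L y" using e u by (simp add: L_def insert_commute)
      then show ?thesis using pp_eq[OF yP] yP by auto
    qed
  qed
qed

definition "R = {(z, pp z) | z. z \<in> P \<and> hp z}"
definition "desc y = {z. (z, y) \<in> R\<^sup>*}"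

lemma desc_self: "y \<in> desc y" by (simp add: desc_def)

lemma desc_step: assumes "z \<in> desc y" "z \<noteq> y"
  shows "z \<in> P \<and> hp z \<and> pp z \<in> desc y"
proof -
  have "(z, y) \<in> R\<^sup>*" using assms by (simp add: desc_def)
  then obtain w where "(z, w) \<in> R" "(w, y) \<in> R\<^sup>*" using assms(2)
    by (metis converse_rtranclE)
  then show ?thesis by (auto simp: R_def desc_def)
qed

lemma desc_P: assumes "y \<in> P" "z \<in> desc y" shows "z \<in> P"
  using assms desc_step by (cases "z = y") auto

lemma desc_rk: assumes "y \<in> P" "z \<in> desc y" shows "rk z \<le> rk y \<and> (z \<noteq> y \<longrightarrow> rk z < rk y)"
proof -
  have "(z, y) \<in> R\<^sup>*" using assms by (simp add: desc_def)
  then show ?thesis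
  proof (induction rule: converse_rtrancl_induct)
    case base then show ?case by simp
  next
    case (step z w)
    then have z: "z \<in> P" "hp z" "w = pp z" by (auto simp: R_def)
    have "w \<in> P"
    proof (rule ccontr)
      assume "w \<notin> P"
      then have "w \<notin> Domain R" by (auto simp: R_def)
      then have "w = y" using step(2) by (metis Domain.intros converse_rtranclE)
      then show False using assms(1) \<open>w \<notin> P\<close> by simp
    qed
    then have "rk z < rk w" using pp_props(2)[OF z(1,2)] z(3) by (auto simp: P_def)
    then show ?case using step.IH by auto
  qed
qed

lemma desc_antisym: assumes "y \<in> P" "z \<in> P" "z \<in> desc y" "y \<in> desc z" shows "y = z"
  using desc_rk[OF assms(1,3)] desc_rk[OF assms(2,4)] by auto

lemma desc_trans: "z \<in> desc y \<Longrightarrow> y \<in> desc w \<Longrightarrow> z \<in> desc w"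
  by (auto simp: desc_def)

lemma desc_child: "c \<in> P \<Longrightarrow> hp c \<Longrightarrow> c \<in> desc (pp c)"
  by (auto simp: desc_def R_def)

lemma walk_enter:
  assumes y: "y \<in> P" and Q: "Q \<subseteq> H"
  shows "(a, b) \<in> (adj E Q) ^^ k \<Longrightarrow> a \<notin> desc y \<Longrightarrow> b \<in> desc y \<Longrightarrow>
         hp y \<and> pp y \<in> Q \<and> (\<exists>j<k. (a, pp y) \<in> (adj E Q) ^^ j)"
proof (induction k arbitrary: b)
  case 0 then show ?case by simp
next
  case (Suc k)
  from Suc.prems(1) obtain b' where b': "(a, b') \<in> (adj E Q) ^^ k" "(b', b) \<in> adj E Q" by auto
  show ?case
  proof (cases "b' \<in> desc y")
    case True
    then show ?thesis using Suc.IH[OF b'(1) Suc.prems(2) True] by (auto intro: less_SucI)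
  next
    case False
    have e: "{b, b'} \<in> E" "b' \<in> Q" using b'(2) by (auto simp: adj_def insert_commute)
    have bP: "b \<in> P" using desc_P[OF y Suc.prems(3)] .
    from nbr[OF bP e(1)] show ?thesis
    proof
      assume h: "hp b \<and> b' = pp b"
      have "b = y"
      proof (rule ccontr)
        assume "b \<noteq> y"
        then have "pp b \<in> desc y" using desc_step[OF Suc.prems(3)] by auto
        then show False using h False by simp
      qed
      then show ?thesis using h e b'(1) by auto
    next
      assume h: "b' \<in> P \<and> hp b' \<and> pp b' = b"
      then have "b' \<in> desc b" using desc_child by fastforce
      then have "b' \<in> desc y" using desc_trans Suc.prems(3) by blast
      then show ?thesis using False by simp
    qed
  qed
qed

lemma desc_conn: assumes "y \<in> P" "desc y \<subseteq> Q" "z \<in> desc y" shows "(z, y) \<in> (adj E Q)\<^sup>*"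
proof -
  have "(z, y) \<in> R\<^sup>*" using assms by (simp add: desc_def)
  then show ?thesis using assms(3)
  proof (induction rule: converse_rtrancl_induct)
    case base then show ?case by simp
  next
    case (step z w)
    then have z: "z \<in> P" "hp z" "w = pp z" by (auto simp: R_def)
    have "w \<in> desc y" using step(2) by (simp add: desc_def)
    then have "(z, w) \<in> adj E Q" using assms(2) step.prems pp_props(1)[OF z(1,2)] z(3)
      by (auto simp: adj_def)
    then show ?case using step.IH \<open>w \<in> desc y\<close> by (meson converse_rtrancl_into_rtrancl)
  qed
qed

end


lemma pmf_union_bound:
  fixes M :: "'a pmf"
  assumes "finite I"
  shows "measure_pmf.prob M (\<Union>i\<in>I. A i) \<le> (\<Sum>i\<in>I. measure_pmf.prob M (A i))"
  by (rule measure_subadditive_finite) (use assms in \<open>auto simp: measure_pmf.emeasure_eq_measure\<close>)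

lemma inc_card:
  assumes W: "W \<subseteq> {1..n}"
  shows "real (card W) * n - real (card W)^2/2 - real (card W)/2 \<le> real (card {e \<in> all_edges n. e \<inter> W \<noteq> {}})"
proof -
  define w where "w = card W"
  have finW: "finite W" using W finite_subset by blast
  define I1 where "I1 = (\<lambda>(v, u). {v, u}) ` (W \<times> ({1..n} - W))"
  define I2 where "I2 = {e. e \<subseteq> W \<and> card e = 2}"
  have inj: "inj_on (\<lambda>(v, u). {v, u}) (W \<times> ({1..n} - W))"
    by (auto simp: inj_on_def doubleton_eq_iff)
  have c1: "card I1 = w * (n - w)"
  proof -
    have "card I1 = card (W \<times> ({1..n} - W))" unfolding I1_def using inj by (rule card_image)
    also have "\<dots> = w * (n - w)" using W finW by (simp add: card_cartesian_product card_Diff_subset w_def)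
    finally show ?thesis .
  qed
  have c2: "card I2 = w choose 2" unfolding I2_def w_def using finW by (rule n_subsets)
  have disj: "I1 \<inter> I2 = {}" by (auto simp: I1_def I2_def)
  have sub: "I1 \<union> I2 \<subseteq> {e \<in> all_edges n. e \<inter> W \<noteq> {}}"
  proof
    fix e assume "e \<in> I1 \<union> I2"
    then show "e \<in> {e \<in> all_edges n. e \<inter> W \<noteq> {}}"
    proof
      assume "e \<in> I1"
      then obtain v u where vu: "e = {v, u}" "v \<in> W" "u \<in> {1..n} - W" by (auto simp: I1_def)
      then have "v \<in> {1..n}" "v \<noteq> u" using W by auto
      then have "e \<in> all_edges n" using vu unfolding all_edges_def by blast
      then show ?thesis using vu by auto
    next
      assume "e \<in> I2"
      then have e: "e \<subseteq> W" "card e = 2" by (auto simp: I2_def)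
      then obtain i j where ij: "i \<noteq> j" "e = {i, j}" by (auto simp: card_2_iff)
      then have "i \<in> {1..n}" "j \<in> {1..n}" using e W by auto
      then have "e \<in> all_edges n" using ij unfolding all_edges_def by blast
      then show ?thesis using ij e by auto
    qed
  qed
  have finA: "finite (all_edges n)"
  proof -
    have "all_edges n \<subseteq> Pow {1..n}" unfolding all_edges_def by auto
    then show ?thesis by (rule finite_subset) simp
  qed
  have "card I1 + card I2 \<le> card {e \<in> all_edges n. e \<inter> W \<noteq> {}}"
  proof -
    have "finite I1" "finite I2" using finA sub by (auto intro: finite_subset)
    then have "card I1 + card I2 = card (I1 \<union> I2)" using disj by (simp add: card_Un_disjoint)
    also have "\<dots> \<le> card {e \<in> all_edges n. e \<inter> W \<noteq> {}}" using sub finA by (intro card_mono) auto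
    finally show ?thesis .
  qed
  then have le: "real (card I1) + real (card I2) \<le> real (card {e \<in> all_edges n. e \<inter> W \<noteq> {}})"
    by (metis of_nat_add of_nat_le_iff)
  have wn: "w \<le> n" using W unfolding w_def by (metis card_atLeastAtMost card_mono finite_atLeastAtMost diff_Suc_1)
  have r1: "real (card I1) = real w * n - real w * w" using c1 wn by (simp add: of_nat_diff algebra_simps)
  have r2: "real (card I2) = real w * (real w - 1) / 2"
  proof (cases "w = 0")
    case True then show ?thesis using c2 by simp
  next
    case False
    have "2 * (w choose 2) = w * (w - 1)"
    proof -
      have "even (w * (w - 1))" by (cases "even w") auto
      then show ?thesis by (simp add: choose_two)
    qed
    then have "2 * real (w choose 2) = real w * (real w - 1)" using False
      by (metis of_nat_1 of_nat_diff of_nat_mult of_nat_numeral One_nat_def Suc_leI neq0_conv)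
    then show ?thesis using c2 by simp
  qed
  show ?thesis using le r1 r2 unfolding w_def[symmetric] by (simp add: power2_eq_square field_simps)
qed


definition FF :: "nat set \<Rightarrow> nat \<Rightarrow> (nat \<Rightarrow> nat) \<Rightarrow> nat set set" where
  "FF X r par = (\<lambda>v. {v, par v}) ` (X - {r})"
definition ZZ :: "nat \<Rightarrow> nat set \<Rightarrow> nat set \<Rightarrow> nat \<Rightarrow> (nat \<Rightarrow> nat) \<Rightarrow> nat set set" where
  "ZZ n X D r par = {e \<in> all_edges n. e \<inter> (X - D) \<noteq> {}} - FF X r par"
definition goodp :: "nat \<Rightarrow> nat set \<Rightarrow> nat \<Rightarrow> (nat \<Rightarrow> nat) \<Rightarrow> bool" where
  "goodp n X r par \<longleftrightarrow> inj_on (\<lambda>v. {v, par v}) (X - {r}) \<and> (\<forall>v\<in>X - {r}. {v, par v} \<in> all_edges n)"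
definition ev :: "nat \<Rightarrow> nat set \<Rightarrow> nat set \<Rightarrow> nat \<Rightarrow> (nat \<Rightarrow> nat) \<Rightarrow> nat set set set" where
  "ev n X D r par = (if goodp n X r par then {E. FF X r par \<subseteq> E \<and> E \<inter> ZZ n X D r par = {}} else {})"

definition gq :: "nat \<Rightarrow> real \<Rightarrow> nat \<Rightarrow> real" where
  "gq n th m = real m * n - real m^2/2 - real m/2 - th * m * n - m"

lemma ev_prob:
  assumes X: "X \<subseteq> {1..n}" and D: "D \<subseteq> X" and r: "r \<in> X" and cD: "real (card D) \<le> th * real (card X)"
    and p: "0 \<le> p" "p \<le> 1"
  shows "measure_pmf.prob (Gnp n p) (ev n X D r par) \<le> p ^ (card X - 1) * exp (- p * gq n th (card X))"
proof (cases "goodp n X r par")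
  case False then show ?thesis using p by (simp add: ev_def)
next
  case True
  define m where "m = card X"
  have finX: "finite X" using X finite_subset by blast
  have Fsub: "FF X r par \<subseteq> all_edges n" using True by (auto simp: FF_def goodp_def)
  have Zsub: "ZZ n X D r par \<subseteq> all_edges n" by (auto simp: ZZ_def)
  have FZ: "FF X r par \<inter> ZZ n X D r par = {}" by (auto simp: ZZ_def)
  have cF: "card (FF X r par) = m - 1"
  proof -
    have "card (FF X r par) = card (X - {r})" unfolding FF_def using True by (intro card_image) (simp add: goodp_def)
    also have "\<dots> = m - 1" using r finX by (simp add: m_def)
    finally show ?thesis .
  qed
  have prob: "measure_pmf.prob (Gnp n p) (ev n X D r par) = p ^ (m - 1) * (1 - p) ^ card (ZZ n X D r par)"
    using Gnp_event[OF Fsub Zsub FZ p] True cF by (simp add: ev_def)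
  define w where "w = card (X - D)"
  have wm: "w = m - card D" using D finX by (simp add: w_def m_def card_Diff_subset finite_subset)
  have Dm: "card D \<le> m" using D finX by (simp add: m_def card_mono)
  have inc: "real w * n - real w^2/2 - real w/2 \<le> real (card {e \<in> all_edges n. e \<inter> (X - D) \<noteq> {}})"
    using inc_card[of "X - D" n] X unfolding w_def by auto
  have finInc: "finite {e \<in> all_edges n. e \<inter> (X - D) \<noteq> {}}" using all_edges_finite by simp
  have cZ: "real (card {e \<in> all_edges n. e \<inter> (X - D) \<noteq> {}}) - real m \<le> real (card (ZZ n X D r par))"
  proof -
    have "card {e \<in> all_edges n. e \<inter> (X - D) \<noteq> {}} \<le> card (ZZ n X D r par) + card (FF X r par)"
    proof -
      have "{e \<in> all_edges n. e \<inter> (X - D) \<noteq> {}} \<subseteq> ZZ n X D r par \<union> FF X r par" by (auto simp: ZZ_def)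
      then have "card {e \<in> all_edges n. e \<inter> (X - D) \<noteq> {}} \<le> card (ZZ n X D r par \<union> FF X r par)"
        using Fsub Zsub all_edges_finite by (intro card_mono) (auto intro: finite_subset)
      also have "\<dots> \<le> card (ZZ n X D r par) + card (FF X r par)" by (rule card_Un_le)
      finally show ?thesis .
    qed
    then show ?thesis using cF by linarith
  qed
  have gw: "real m * n - real m^2/2 - real m/2 - th * m * n \<le> real w * n - real w^2/2 - real w/2"
  proof -
    have w_le: "real w \<le> real m" and w_ge: "real m - real w \<le> th * m"
      using wm Dm cD by (auto simp: m_def of_nat_diff)
    have "real m * n - real m^2/2 - real m/2 - (real w * n - real w^2/2 - real w/2)
        = (real m - real w) * n - (real m^2 - real w^2)/2 - (real m - real w)/2" by (simp add: field_simps)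
    also have "\<dots> \<le> (real m - real w) * n"
    proof -
      have "real w^2 \<le> real m^2" using w_le by (intro power_mono) auto
      then have "0 \<le> (real m^2 - real w^2)/2" "0 \<le> (real m - real w)/2" using w_le by auto
      then show ?thesis by (smt (verit))
    qed
    also have "\<dots> \<le> th * m * n" using w_ge by (intro mult_right_mono) auto
    finally show ?thesis by simp
  qed
  have Zlow: "gq n th m \<le> real (card (ZZ n X D r par))"
    using gw inc cZ unfolding gq_def by linarith
  have "(1 - p) ^ card (ZZ n X D r par) \<le> exp (- p) ^ card (ZZ n X D r par)"
    using p by (intro power_mono) (auto simp: exp_ge_add_one_self[of "-p", simplified])
  also have "\<dots> = exp (- p * card (ZZ n X D r par))" by (simp add: exp_of_nat_mult[symmetric] mult.commute)
  also have "\<dots> \<le> exp (- p * gq n th m)" using Zlow p by (simp add: mult_left_mono)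
  finally have "(1 - p) ^ card (ZZ n X D r par) \<le> exp (- p * gq n th m)" .
  then have "p ^ (m - 1) * (1 - p) ^ card (ZZ n X D r par) \<le> p ^ (m - 1) * exp (- p * gq n th m)"
    using p by (intro mult_left_mono) auto
  then show ?thesis using prob by (simp add: m_def)
qed

definition XS :: "nat \<Rightarrow> nat \<Rightarrow> nat set set" where "XS n K = {X. X \<subseteq> {1..n} \<and> K \<le> card X}"
definition DS :: "real \<Rightarrow> nat set \<Rightarrow> nat set set" where "DS th X = {D. D \<subseteq> X \<and> real (card D) \<le> th * real (card X)}"
definition PS :: "nat set \<Rightarrow> nat \<Rightarrow> (nat \<Rightarrow> nat) set" where "PS X r = (X - {r}) \<rightarrow>\<^sub>E X"
definition BigU :: "nat \<Rightarrow> nat \<Rightarrow> real \<Rightarrow> nat set set set" where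
  "BigU n K th = (\<Union>X\<in>XS n K. \<Union>D\<in>DS th X. \<Union>r\<in>X. \<Union>par\<in>PS X r. ev n X D r par)"

lemma regroup:
  fixes f :: "nat \<Rightarrow> real"
  shows "(\<Sum>X\<in>XS n K. f (card X)) = (\<Sum>m\<in>{K..n}. real (n choose m) * f m)"
proof -
  have eq: "XS n K = (\<Union>m\<in>{K..n}. {X. X \<subseteq> {1..n} \<and> card X = m})"
  proof -
    have "card X \<le> n" if "X \<subseteq> {1..n}" for X
      using card_mono[OF _ that] by simp
    then show ?thesis by (auto simp: XS_def)
  qed
  have "(\<Sum>X\<in>XS n K. f (card X)) = (\<Sum>m\<in>{K..n}. \<Sum>X\<in>{X. X \<subseteq> {1..n} \<and> card X = m}. f (card X))"
    unfolding eq by (intro sum.UNION_disjoint) auto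
  also have "\<dots> = (\<Sum>m\<in>{K..n}. real (n choose m) * f m)"
  proof (intro sum.cong refl)
    fix m assume "m \<in> {K..n}"
    have "(\<Sum>X\<in>{X. X \<subseteq> {1..n} \<and> card X = m}. f (card X)) = (\<Sum>X\<in>{X. X \<subseteq> {1..n} \<and> card X = m}. f m)"
      by (intro sum.cong) auto
    also have "\<dots> = real (card {X. X \<subseteq> {1..n} \<and> card X = m}) * f m" by simp
    also have "card {X. X \<subseteq> {1..n} \<and> card X = m} = n choose m"
      using n_subsets[of "{1..n}" m] by simp
    finally show "(\<Sum>X\<in>{X. X \<subseteq> {1..n} \<and> card X = m}. f (card X)) = real (n choose m) * f m" .
  qed
  finally show ?thesis .
qed

lemma finite_XS: "finite (XS n K)"
  by (rule finite_subset[of _ "Pow {1..n}"]) (auto simp: XS_def)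

lemma BigU_bound:
  assumes K: "1 \<le> K" and th: "0 < th" "th \<le> 1" and p: "0 \<le> p" "p \<le> 1"
  shows "measure_pmf.prob (Gnp n p) (BigU n K th) \<le>
    (\<Sum>m\<in>{K..n}. real (n choose m) * (exp (m * (th + 2 * sqrt th)) * (real m ^ m * p ^ (m - 1)) * exp (- p * gq n th m)))"
proof -
  define bnd where "bnd m = p ^ (m - 1) * exp (- p * gq n th m)" for m
  have bnd0: "0 \<le> bnd m" for m using p by (simp add: bnd_def)
  have "measure_pmf.prob (Gnp n p) (BigU n K th) \<le>
     (\<Sum>X\<in>XS n K. measure_pmf.prob (Gnp n p) (\<Union>D\<in>DS th X. \<Union>r\<in>X. \<Union>par\<in>PS X r. ev n X D r par))"
    unfolding BigU_def by (rule pmf_union_bound[OF finite_XS])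
  also have "\<dots> \<le> (\<Sum>X\<in>XS n K. exp (card X * (th + 2 * sqrt th)) * (real (card X) ^ card X * bnd (card X)))"
  proof (intro sum_mono)
    fix X assume X: "X \<in> XS n K"
    define m where "m = card X"
    have Xs: "X \<subseteq> {1..n}" and Km: "K \<le> m" using X by (auto simp: XS_def m_def)
    have finX: "finite X" using Xs finite_subset by blast
    have m1: "1 \<le> m" using K Km by simp
    have finD: "finite (DS th X)" using finX by (auto simp: DS_def)
    have "measure_pmf.prob (Gnp n p) (\<Union>D\<in>DS th X. \<Union>r\<in>X. \<Union>par\<in>PS X r. ev n X D r par)
       \<le> (\<Sum>D\<in>DS th X. measure_pmf.prob (Gnp n p) (\<Union>r\<in>X. \<Union>par\<in>PS X r. ev n X D r par))"
      by (rule pmf_union_bound[OF finD])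
    also have "\<dots> \<le> (\<Sum>D\<in>DS th X. real m ^ m * bnd m)"
    proof (intro sum_mono)
      fix D assume D: "D \<in> DS th X"
      have "measure_pmf.prob (Gnp n p) (\<Union>r\<in>X. \<Union>par\<in>PS X r. ev n X D r par)
         \<le> (\<Sum>r\<in>X. measure_pmf.prob (Gnp n p) (\<Union>par\<in>PS X r. ev n X D r par))"
        by (rule pmf_union_bound[OF finX])
      also have "\<dots> \<le> (\<Sum>r\<in>X. real m ^ (m - 1) * bnd m)"
      proof (intro sum_mono)
        fix r assume r: "r \<in> X"
        have finP: "finite (PS X r)" unfolding PS_def using finX by (intro finite_PiE) auto
        have cP: "card (PS X r) = m ^ (m - 1)"
          unfolding PS_def using finX r by (simp add: card_PiE m_def card_Diff_singleton)
        have "measure_pmf.prob (Gnp n p) (\<Union>par\<in>PS X r. ev n X D r par)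
          \<le> (\<Sum>par\<in>PS X r. measure_pmf.prob (Gnp n p) (ev n X D r par))"
          by (rule pmf_union_bound[OF finP])
        also have "\<dots> \<le> (\<Sum>par\<in>PS X r. bnd m)"
          using ev_prob[OF Xs _ r _ p] D unfolding bnd_def m_def DS_def by (intro sum_mono) auto
        also have "\<dots> = real m ^ (m - 1) * bnd m" using cP by simp
        finally show "measure_pmf.prob (Gnp n p) (\<Union>par\<in>PS X r. ev n X D r par) \<le> real m ^ (m - 1) * bnd m" .
      qed
      also have "\<dots> = real m * real m ^ (m - 1) * bnd m" by (simp add: m_def)
      also have "real m * real m ^ (m - 1) = real m ^ m" using m1 by (cases m) auto
      finally show "measure_pmf.prob (Gnp n p) (\<Union>r\<in>X. \<Union>par\<in>PS X r. ev n X D r par) \<le> real m ^ m * bnd m" .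
    qed
    also have "\<dots> = real (card (DS th X)) * (real m ^ m * bnd m)" by simp
    also have "\<dots> \<le> exp (m * (th + 2 * sqrt th)) * (real m ^ m * bnd m)"
      using card_small_subsets[OF finX th] bnd0 unfolding DS_def m_def
      by (intro mult_right_mono) auto
    finally show "measure_pmf.prob (Gnp n p) (\<Union>D\<in>DS th X. \<Union>r\<in>X. \<Union>par\<in>PS X r. ev n X D r par)
      \<le> exp (card X * (th + 2 * sqrt th)) * (real (card X) ^ card X * bnd (card X))" by (simp add: m_def)
  qed
  also have "\<dots> = (\<Sum>m\<in>{K..n}. real (n choose m) * (exp (m * (th + 2 * sqrt th)) * (real m ^ m * bnd m)))"
    by (rule regroup)
  finally show ?thesis by (simp add: bnd_def mult.assoc)
qed


context pend_rk
begin

lemma P_C_disj: "P \<inter> C = {}" by (auto simp: P_def)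

lemma desc_sub_P: "y \<in> P \<Longrightarrow> desc y \<subseteq> P" using desc_P by blast

lemma witness:
  assumes SH: "S \<subseteq> H" and Sc: "induces_connected E S"
  shows "\<exists>X D r par. S \<subseteq> X \<and> X \<subseteq> H \<and> D \<subseteq> X \<and> card D \<le> card (S \<inter> C) + 1 \<and> r \<in> X \<and>
     (\<forall>v\<in>X - {r}. par v \<in> X \<and> par v \<noteq> v \<and> {v, par v} \<in> E) \<and>
     inj_on (\<lambda>v. {v, par v}) (X - {r}) \<and>
     (\<forall>e\<in>E. e \<inter> (X - D) \<noteq> {} \<longrightarrow> e \<in> (\<lambda>v. {v, par v}) ` (X - {r}))"
proof -
  define A where "A = S \<inter> C"
  define B where "B = {y \<in> S \<inter> P. \<not> (hp y \<and> pp y \<in> S)}"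
  define X where "X = S \<union> (\<Union>y\<in>S \<inter> P. desc y)"
  define D where "D = A \<union> B"
  have Sne: "S \<noteq> {}" and Sconn: "\<forall>u\<in>S. \<forall>v\<in>S. (u, v) \<in> (adj E S)\<^sup>*"
    using Sc by (auto simp: induces_connected_def)
  have finS: "finite S" using SH finH finite_subset by blast
  have SCP: "s \<in> C \<or> s \<in> P" if "s \<in> S" for s using that SH by (auto simp: P_def)
  have XH: "X \<subseteq> H" unfolding X_def using SH desc_sub_P by (auto simp: P_def)
  have finX: "finite X" using XH finH finite_subset by blast
  have SX: "S \<subseteq> X" by (auto simp: X_def)
  have descX: "desc y \<subseteq> X" if "y \<in> S \<inter> P" for y using that by (auto simp: X_def)
  have B_desc: "S \<subseteq> desc b" if b: "b \<in> B" for b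
  proof
    fix s assume s: "s \<in> S"
    show "s \<in> desc b"
    proof (rule ccontr)
      assume ns: "s \<notin> desc b"
      have bS: "b \<in> S" "b \<in> P" using b by (auto simp: B_def)
      have "(s, b) \<in> (adj E S)\<^sup>*" using Sconn s bS by auto
      then obtain k where "(s, b) \<in> (adj E S) ^^ k" by (auto simp: rtrancl_power)
      from walk_enter[OF bS(2) SH this ns desc_self] have "hp b \<and> pp b \<in> S" by auto
      then show False using b by (auto simp: B_def)
    qed
  qed
  have B_X: "X \<subseteq> desc b" if b: "b \<in> B" for b
  proof
    fix z assume "z \<in> X"
    then consider "z \<in> S" | y where "y \<in> S \<inter> P" "z \<in> desc y" by (auto simp: X_def)
    then show "z \<in> desc b"
    proof cases
      case 1 then show ?thesis using B_desc[OF b] by auto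
    next
      case 2
      then have "y \<in> desc b" using B_desc[OF b] by auto
      then show ?thesis using 2 desc_trans by blast
    qed
  qed
  have BP: "B \<subseteq> P" by (auto simp: B_def)
  have B_A: "A = {}" if b: "b \<in> B" for b
  proof -
    have "S \<subseteq> P" using B_desc[OF b] desc_sub_P BP b by blast
    then show ?thesis using P_C_disj by (auto simp: A_def)
  qed
  have cardB: "card B \<le> 1"
  proof -
    have finB: "finite B" using finS by (auto simp: B_def)
    have "\<forall>b\<in>B. \<forall>b'\<in>B. b = b'"
    proof (intro ballI)
      fix b b' assume bb: "b \<in> B" "b' \<in> B"
      have "b' \<in> desc b" "b \<in> desc b'" using B_desc bb by (auto simp: B_def)
      then show "b = b'" using desc_antisym bb BP by blast
    qed
    then show ?thesis using card_le_Suc0_iff_eq[OF finB] by simp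
  qed
  have cardD: "card D \<le> card A + 1"
    using card_Un_le[of A B] cardB unfolding D_def by linarith
  have DX: "D \<subseteq> X" using SX by (auto simp: D_def A_def B_def)
  have Dne: "D \<noteq> {}"
  proof
    assume "D = {}"
    then have A0: "A = {}" and B0: "B = {}" by (auto simp: D_def)
    then have SP: "S \<subseteq> P" using SCP by (auto simp: A_def)
    have up: "hp s \<and> pp s \<in> S" if "s \<in> S" for s using B0 SP that by (auto simp: B_def)
    define M where "M = Max (rk ` S)"
    have "M \<in> rk ` S" unfolding M_def using finS Sne by (intro Max_in) auto
    then obtain s where s: "s \<in> S" "rk s = M" by auto
    have "pp s \<in> S" "hp s" using up[OF s(1)] by auto
    then have "pp s \<in> P" "rk (pp s) \<le> M" using SP finS by (auto simp: M_def)
    moreover have "pp s \<in> C \<or> (pp s \<in> P \<and> rk (pp s) > rk s)" using pp_props(2) SP s \<open>hp s\<close> by auto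
    ultimately show False using s P_C_disj by auto
  qed
  then obtain r where rD: "r \<in> D" by auto
  have rS: "r \<in> S" using rD by (auto simp: D_def A_def B_def)
  have rX: "r \<in> X" using rS SX by auto
  have conn: "\<forall>z\<in>X. (r, z) \<in> (adj E X)\<^sup>*"
  proof
    fix z assume "z \<in> X"
    have mono: "(adj E S)\<^sup>* \<subseteq> (adj E X)\<^sup>*" using adj_mono[OF SX] by (rule rtrancl_mono)
    from \<open>z \<in> X\<close> consider "z \<in> S" | y where "y \<in> S \<inter> P" "z \<in> desc y" by (auto simp: X_def)
    then show "(r, z) \<in> (adj E X)\<^sup>*"
    proof cases
      case 1 then show ?thesis using Sconn rS mono by blast
    next
      case 2
      have "(r, y) \<in> (adj E X)\<^sup>*" using Sconn rS 2 mono by blast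
      moreover have "(z, y) \<in> (adj E X)\<^sup>*" using desc_conn[of y X z] 2 descX by auto
      then have "(y, z) \<in> (adj E X)\<^sup>*" by (rule adj_rtrancl_sym)
      ultimately show ?thesis by simp
    qed
  qed
  obtain dist par where
    d1: "\<forall>z\<in>X. (r, z) \<in> (adj E X) ^^ dist z" and
    d2: "\<forall>z\<in>X. \<forall>k. (r, z) \<in> (adj E X) ^^ k \<longrightarrow> dist z \<le> k" and
    d3: "\<forall>z\<in>X - {r}. (par z, z) \<in> adj E X \<and> dist (par z) < dist z"
    using bfs_tree[OF finX rX conn] by blast
  have r_notin: "r \<notin> desc y" if "y \<in> X" "y \<in> P" "y \<noteq> r" for y
  proof
    assume ry: "r \<in> desc y"
    show False
    proof (cases "r \<in> A")
      case True
      then have "r \<in> C" by (auto simp: A_def)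
      then show False using ry desc_sub_P[OF that(2)] P_C_disj by auto
    next
      case False
      then have "r \<in> B" using rD by (auto simp: D_def)
      then have "y \<in> desc r" using B_X that(1) by auto
      then show False using desc_antisym[of r y] ry that BP \<open>r \<in> B\<close> by auto
    qed
  qed
  have upd: "hp y \<and> pp y \<in> X \<and> dist (pp y) < dist y" if "y \<in> X" "y \<in> P" "y \<noteq> r" for y
  proof -
    have "(r, y) \<in> (adj E X) ^^ dist y" using d1 that by auto
    from walk_enter[OF that(2) XH this r_notin[OF that] desc_self]
    obtain j where "hp y" "pp y \<in> X" "j < dist y" "(r, pp y) \<in> (adj E X) ^^ j" by auto
    moreover then have "dist (pp y) \<le> j" using d2 by auto
    ultimately show ?thesis by auto
  qed
  define W where "W = X - D"
  have W_anc: "\<exists>y0\<in>S \<inter> P. w \<in> desc y0" if "w \<in> W" for w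
  proof (cases "w \<in> S")
    case True
    then have "w \<notin> C" using that by (auto simp: W_def D_def A_def)
    then have "w \<in> P" using SCP True by auto
    then show ?thesis using True desc_self by blast
  next
    case False
    then show ?thesis using that by (auto simp: W_def X_def)
  qed
  have WP: "w \<in> P" if "w \<in> W" for w
    using W_anc[OF that] desc_P by auto
  have W_closed: "y \<in> X" if w: "w \<in> W" and e: "{w, y} \<in> E" for w y
  proof -
    obtain y0 where y0: "y0 \<in> S \<inter> P" "w \<in> desc y0" using W_anc[OF w] by auto
    from nbr[OF WP[OF w] e] show ?thesis
    proof
      assume h: "hp w \<and> y = pp w"
      show ?thesis
      proof (cases "w = y0")
        case True
        then have "w \<in> S" "w \<notin> B" using y0 w by (auto simp: W_def D_def)
        then show ?thesis using h SX True y0 by (auto simp: B_def)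
      next
        case False
        then have "pp w \<in> desc y0" using desc_step[OF y0(2)] by auto
        then show ?thesis using h descX[OF y0(1)] by auto
      qed
    next
      assume h: "y \<in> P \<and> hp y \<and> pp y = w"
      then have "y \<in> desc w" using desc_child by fastforce
      then have "y \<in> desc y0" using y0 desc_trans by blast
      then show ?thesis using descX[OF y0(1)] by auto
    qed
  qed
  have rW: "r \<notin> W" using rD by (auto simp: W_def)
  have parW: "par w = pp w" if w: "w \<in> W" for w
  proof -
    have wX: "w \<in> X - {r}" using w rW by (auto simp: W_def)
    have a: "(par w, w) \<in> adj E X" "dist (par w) < dist w" using d3 wX by auto
    have e: "{w, par w} \<in> E" using a(1) by (auto simp: adj_def insert_commute)
    from nbr[OF WP[OF w] e] show ?thesis
    proof
      assume "hp w \<and> par w = pp w" then show ?thesis by simp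
    next
      assume h: "par w \<in> P \<and> hp (par w) \<and> pp (par w) = w"
      define c where "c = par w"
      have cX: "c \<in> X" using a(1) by (auto simp: adj_def c_def)
      have cr: "c \<noteq> r"
      proof
        assume "c = r"
        then have "r \<in> P" using h by (simp add: c_def)
        then have "r \<in> B" using rD P_C_disj by (auto simp: D_def A_def)
        then have "w \<in> desc r" using B_X wX by auto
        moreover have "r \<in> desc w" using desc_child[of c] h \<open>c = r\<close> by (auto simp: c_def)
        ultimately have "w = r" using desc_antisym[of r w] \<open>r \<in> P\<close> WP[OF w] by auto
        then show False using wX by simp
      qed
      have "dist (pp c) < dist c" using upd[OF cX _ cr] h by (auto simp: c_def)
      then have "dist w < dist (par w)" using h by (simp add: c_def)
      then show ?thesis using a(2) by simp
    qed
  qed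
  have par_ok: "\<forall>v\<in>X - {r}. par v \<in> X \<and> par v \<noteq> v \<and> {v, par v} \<in> E"
  proof
    fix v assume v: "v \<in> X - {r}"
    then have a: "(par v, v) \<in> adj E X" "dist (par v) < dist v" using d3 by auto
    then show "par v \<in> X \<and> par v \<noteq> v \<and> {v, par v} \<in> E" by (auto simp: adj_def insert_commute)
  qed
  have inj: "inj_on (\<lambda>v. {v, par v}) (X - {r})"
  proof (rule inj_onI)
    fix u v assume u: "u \<in> X - {r}" and v: "v \<in> X - {r}" and eq: "{u, par u} = {v, par v}"
    have du: "dist (par u) < dist u" and dv: "dist (par v) < dist v" using d3 u v by auto
    from eq have "(u = v \<and> par u = par v) \<or> (u = par v \<and> par u = v)" by (auto simp: doubleton_eq_iff)
    then show "u = v" using du dv by auto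
  qed
  have cover: "\<forall>e\<in>E. e \<inter> (X - D) \<noteq> {} \<longrightarrow> e \<in> (\<lambda>v. {v, par v}) ` (X - {r})"
  proof (intro ballI impI)
    fix e assume e: "e \<in> E" and ne: "e \<inter> (X - D) \<noteq> {}"
    then obtain w where w: "w \<in> e" "w \<in> W" by (auto simp: W_def)
    obtain i j where ij: "e = {i, j}" "i \<noteq> j" using e Esub by (auto simp: all_edges_def)
    obtain y where ey: "e = {w, y}" using w(1) ij by auto
    have wX: "w \<in> X - {r}" using w rW by (auto simp: W_def)
    from nbr[OF WP[OF w(2)]] e ey have "(hp w \<and> y = pp w) \<or> (y \<in> P \<and> hp y \<and> pp y = w)" by simp
    then show "e \<in> (\<lambda>v. {v, par v}) ` (X - {r})"
    proof
      assume "hp w \<and> y = pp w"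
      then have "e = {w, par w}" using parW[OF w(2)] ey by simp
      then show ?thesis using wX by blast
    next
      assume h: "y \<in> P \<and> hp y \<and> pp y = w"
      have yX: "y \<in> X" using W_closed[OF w(2)] e ey by simp
      have yw: "y \<noteq> w" using edge_mem e ey by blast
      have yB: "y \<notin> B"
      proof
        assume "y \<in> B"
        then have "w \<in> desc y" using B_X wX by auto
        moreover have "y \<in> desc w" using desc_child h by fastforce
        ultimately show False using desc_antisym[of y w] h WP[OF w(2)] yw by auto
      qed
      have yW: "y \<in> W" using yX yB h P_C_disj by (auto simp: W_def D_def A_def)
      have "e = {y, par y}" using parW[OF yW] h ey by (simp add: insert_commute)
      moreover have "y \<in> X - {r}" using yW rW by (auto simp: W_def)
      ultimately show ?thesis by blast
    qed
  qed
  show ?thesis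
    apply (rule exI[of _ X], rule exI[of _ D], rule exI[of _ r], rule exI[of _ par])
    using SX XH DX cardD rX par_ok inj cover unfolding A_def by auto
qed

end


lemma witness_global:
  assumes Es: "E \<subseteq> all_edges n" and H: "is_largest_component n E H" and S: "S \<subseteq> H" "induces_connected E S"
  shows "H \<subseteq> {1..n} \<and> (\<exists>X D r par. S \<subseteq> X \<and> X \<subseteq> H \<and> D \<subseteq> X \<and> card D \<le> card (S \<inter> core E H) + 1 \<and> r \<in> X \<and>
     (\<forall>v\<in>X - {r}. par v \<in> X \<and> par v \<noteq> v \<and> {v, par v} \<in> E) \<and>
     inj_on (\<lambda>v. {v, par v}) (X - {r}) \<and>
     (\<forall>e\<in>E. e \<inter> (X - D) \<noteq> {} \<longrightarrow> e \<in> (\<lambda>v. {v, par v}) ` (X - {r})))"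
proof -
  interpret pend n E H using Es H by unfold_locales (auto simp: is_largest_component_def)
  obtain rk :: "nat \<Rightarrow> nat" where rk: "inj_on rk P" "\<forall>u\<in>P. card {y. (y \<in> C \<or> (y \<in> P \<and> rk y > rk u)) \<and> {u, y} \<in> E} \<le> 1"
    using rank_exists_aux[of P] by auto
  interpret pend_rk n E H rk using rk by unfold_locales auto
  show ?thesis using witness[OF S] H_sub unfolding C_def by auto
qed

lemma bad_in_BigU:
  assumes Es: "E \<subseteq> all_edges n" and H: "is_largest_component n E H" and S: "S \<subseteq> H" "induces_connected E S"
    and Ssz: "chi * ln (real n) \<le> real (card S)"
    and bad: "real (card (S \<inter> core E H)) < real (card S) / l"
    and th: "0 < th" and l: "l = 2 / th" and big: "2 / th \<le> chi * ln (real n)"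
  shows "E \<in> BigU n (nat \<lceil>chi * ln (real n)\<rceil>) th"
proof -
  obtain X D r par where HX: "H \<subseteq> {1..n}" and w: "S \<subseteq> X" "X \<subseteq> H" "D \<subseteq> X"
    "card D \<le> card (S \<inter> core E H) + 1" "r \<in> X"
    "\<forall>v\<in>X - {r}. par v \<in> X \<and> par v \<noteq> v \<and> {v, par v} \<in> E"
    "inj_on (\<lambda>v. {v, par v}) (X - {r})"
    "\<forall>e\<in>E. e \<inter> (X - D) \<noteq> {} \<longrightarrow> e \<in> (\<lambda>v. {v, par v}) ` (X - {r})"
  proof -
    have HX: "H \<subseteq> {1..n}" and ex: "\<exists>X D r par. S \<subseteq> X \<and> X \<subseteq> H \<and> D \<subseteq> X \<and> card D \<le> card (S \<inter> core E H) + 1 \<and> r \<in> X \<and>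
     (\<forall>v\<in>X - {r}. par v \<in> X \<and> par v \<noteq> v \<and> {v, par v} \<in> E) \<and>
     inj_on (\<lambda>v. {v, par v}) (X - {r}) \<and>
     (\<forall>e\<in>E. e \<inter> (X - D) \<noteq> {} \<longrightarrow> e \<in> (\<lambda>v. {v, par v}) ` (X - {r}))"
      using witness_global[OF Es H S] by simp_all
    from ex show ?thesis by (elim exE conjE) (rule that[OF HX]; assumption)
  qed
  have Xn: "X \<subseteq> {1..n}" using w HX by auto
  have finX: "finite X" using Xn finite_subset by blast
  have SXc: "card S \<le> card X" using w(1) finX by (rule card_mono[rotated])
  have XK: "nat \<lceil>chi * ln (real n)\<rceil> \<le> card X"
  proof -
    have "chi * ln (real n) \<le> real (card X)" using Ssz SXc by (meson of_nat_le_iff order_trans)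
    then show ?thesis by (simp add: nat_le_iff ceiling_le_iff)
  qed
  have XS: "X \<in> XS n (nat \<lceil>chi * ln (real n)\<rceil>)" using Xn XK by (simp add: XS_def)
  have DS: "D \<in> DS th X"
  proof -
    have cX: "2 / th \<le> real (card X)" using big Ssz SXc by (meson of_nat_le_iff order_trans)
    then have "2 \<le> th * real (card X)" using th by (simp add: field_simps)
    have "real (card D) \<le> real (card (S \<inter> core E H)) + 1" using w(4) by simp
    also have "\<dots> < real (card S) / l + 1" using bad by simp
    also have "\<dots> \<le> real (card X) / l + 1" using SXc l th by (simp add: divide_right_mono)
    also have "\<dots> = th * real (card X) / 2 + 1" using l th by simp
    also have "\<dots> \<le> th * real (card X)" using \<open>2 \<le> th * real (card X)\<close> by simp
    finally show ?thesis using w(3) by (simp add: DS_def)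
  qed
  define par' where "par' = restrict par (X - {r})"
  have PS: "par' \<in> PS X r" using w(6) by (auto simp: PS_def par'_def)
  have img: "(\<lambda>v. {v, par' v}) ` (X - {r}) = (\<lambda>v. {v, par v}) ` (X - {r})"
    by (auto simp: par'_def)
  have good: "goodp n X r par'"
  proof -
    have "inj_on (\<lambda>v. {v, par' v}) (X - {r})"
      using w(7) by (rule inj_on_cong[THEN iffD1, rotated]) (simp add: par'_def)
    moreover have "\<forall>v\<in>X - {r}. {v, par' v} \<in> all_edges n" using w(6) Es by (auto simp: par'_def)
    ultimately show ?thesis by (simp add: goodp_def)
  qed
  have "E \<in> ev n X D r par'"
  proof -
    have "FF X r par' \<subseteq> E" using w(6) by (auto simp: FF_def par'_def)
    moreover have "E \<inter> ZZ n X D r par' = {}"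
      using w(8) img by (auto simp: ZZ_def FF_def)
    ultimately show ?thesis using good by (simp add: ev_def)
  qed
  then show ?thesis unfolding BigU_def using XS DS w(5) PS by blast
qed


lemma Gnp_support: "E \<in> set_pmf (Gnp n p) \<Longrightarrow> E \<subseteq> all_edges n"
  by (auto simp: Gnp_def)

lemma per_n:
  fixes c1 c2 c chi l th s g :: real and n :: nat
  assumes c: "1 < c1" "c1 < c2" "c1 < c" "c < c2"
    and g: "g = gam c1" and s: "s = g / (2 * (3 + c2))" and th: "th = s^2" and l: "l = 2 / th"
    and chi: "chi = 8 / g + 1"
    and n: "1 \<le> n" "c2 \<le> real n" and big: "2 / th \<le> chi * ln (real n)"
  shows "1 - (real n + 1) * (real n / c1) * exp (2 * c2) / real n ^ 4 \<le>
    measure_pmf.prob (Gnp n (c / real n))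
          {E. \<forall>H. is_largest_component n E H \<longrightarrow>
                (\<forall>S. S \<subseteq> H \<and> induces_connected E S \<and>
                     chi * ln (real n) \<le> real (card S) \<and> card S \<le> card (core E H) \<longrightarrow>
                     real (card (S \<inter> core E H)) \<ge> real (card S) / l)}"
    (is "_ \<le> measure_pmf.prob ?M ?G")
proof -
  have gpos: "0 < g" using gam_pos c g by simp
  have gle: "g \<le> 1/24" using gam_le c g by simp
  have spos: "0 < s" and sle: "s \<le> 1" using gpos gle c by (auto simp: s field_simps)
  have thpos: "0 < th" and thle: "th \<le> 1" using spos sle by (auto simp: th power_le_one)
  have sqth: "sqrt th = s" using spos by (simp add: th)
  define p where "p = c / real n"
  have n0: "0 < real n" using n by simp
  have p: "0 \<le> p" "p \<le> 1" using c n by (auto simp: p_def field_simps)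
  define K where "K = nat \<lceil>chi * ln (real n)\<rceil>"
  have chiln: "1 \<le> chi * ln (real n)"
  proof -
    have "2 \<le> 2 / th" using thpos thle by (simp add: field_simps)
    then show ?thesis using big by simp
  qed
  have "1 \<le> \<lceil>chi * ln (real n)\<rceil>" using chiln by (metis ceiling_mono ceiling_one)
  then have K1: "1 \<le> K" by (simp add: K_def le_nat_iff)
  have Kge: "chi * ln (real n) \<le> real K" unfolding K_def using chiln by linarith
  have sub: "- ?G \<inter> set_pmf ?M \<subseteq> BigU n K th"
  proof
    fix E assume E: "E \<in> - ?G \<inter> set_pmf ?M"
    then have Es: "E \<subseteq> all_edges n" using Gnp_support by blast
    from E obtain H S where H: "is_largest_component n E H" and S: "S \<subseteq> H" "induces_connected E S"
      "chi * ln (real n) \<le> real (card S)" and bad: "\<not> real (card (S \<inter> core E H)) \<ge> real (card S) / l"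
      by auto
    show "E \<in> BigU n K th" unfolding K_def
      by (rule bad_in_BigU[OF Es H S(1,2,3) _ thpos l big]) (use bad in simp)
  qed
  have "measure_pmf.prob ?M (- ?G) = measure_pmf.prob ?M (- ?G \<inter> set_pmf ?M)"
    by (simp add: measure_Int_set_pmf)
  also have "\<dots> \<le> measure_pmf.prob ?M (BigU n K th)"
    using sub by (intro measure_pmf.finite_measure_mono) auto
  also have "\<dots> \<le> (\<Sum>m\<in>{K..n}. real (n choose m) * (exp (m * (th + 2 * sqrt th)) * (real m ^ m * p ^ (m - 1)) * exp (- p * gq n th m)))"
    unfolding p_def by (rule BigU_bound[OF K1 thpos thle p[unfolded p_def]])
  also have "\<dots> \<le> (\<Sum>m\<in>{K..n}. (real n / c1) * exp (2 * c2) * exp (- (g * K / 2)))"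
  proof (intro sum_mono)
    fix m assume m: "m \<in> {K..n}"
    then have m1: "1 \<le> m" "m \<le> n" using K1 by auto
    have "real (n choose m) * (exp (m * (th + 2 * sqrt th)) * (real m ^ m * p ^ (m - 1)) * exp (- p * gq n th m))
      = exp (m * (th + 2 * sqrt th)) * (real m ^ m * (c / n) ^ (m - 1)) * real (n choose m)
          * exp (- (c / n) * (m * n - m^2/2 - m/2 - th * m * n - m))"
      by (simp add: p_def gq_def mult_ac)
    also have "\<dots> \<le> (n / c) * exp (2 * c) * exp (m * (th + 2 * sqrt th + c * th - gam c1))"
      by (rule term_bound[OF m1 c(1) _ thpos]) (use c in simp)
    also have "\<dots> \<le> (real n / c1) * exp (2 * c2) * exp (- (g * K / 2))"
    proof -
      have a: "n / c \<le> real n / c1" using c n0 by (intro divide_left_mono) auto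
      have b: "exp (2 * c) \<le> exp (2 * c2)" using c by simp
      have "th + 2 * sqrt th + c * th \<le> g / 2"
      proof -
        have "c * th \<le> c2 * th" using c thpos by (intro mult_right_mono) auto
        moreover have "th \<le> s" using spos sle by (simp add: th power2_eq_square mult_left_le)
        moreover have "c2 * th \<le> c2 * s" using \<open>th \<le> s\<close> c by (intro mult_left_mono) auto
        moreover have "s * (3 + c2) = g / 2" using c by (simp add: s field_simps)
        ultimately show ?thesis by (simp add: sqth algebra_simps)
      qed
      then have "m * (th + 2 * sqrt th + c * th - gam c1) \<le> m * (- (g / 2))"
        using g by (intro mult_left_mono) auto
      also have "\<dots> \<le> - (g * K / 2)" using m gpos by (simp add: mult_left_mono)
      finally have cc: "exp (m * (th + 2 * sqrt th + c * th - gam c1)) \<le> exp (- (g * K / 2))" by simp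
      show ?thesis
        using a b cc c n0 by (intro mult_mono) auto
    qed
    finally show "real (n choose m) * (exp (m * (th + 2 * sqrt th)) * (real m ^ m * p ^ (m - 1)) * exp (- p * gq n th m))
       \<le> (real n / c1) * exp (2 * c2) * exp (- (g * K / 2))" .
  qed
  also have "\<dots> = real (card {K..n}) * ((real n / c1) * exp (2 * c2) * exp (- (g * K / 2)))" by simp
  also have "\<dots> \<le> (real n + 1) * ((real n / c1) * exp (2 * c2) * (1 / real n ^ 4))"
  proof (rule mult_mono)
    show "real (card {K..n}) \<le> real n + 1" by simp
    have "- (g * K / 2) \<le> - (4 * ln (real n))"
    proof -
      have "g * (chi * ln (real n)) \<le> g * K" using Kge gpos by (intro mult_left_mono) auto
      moreover have "g * chi = 8 + g" using gpos by (simp add: chi field_simps)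
      moreover have "0 \<le> ln (real n)" using n by simp
      ultimately have "(8 + g) * ln (real n) \<le> g * K" by (simp add: mult.assoc[symmetric])
      moreover have "8 * ln (real n) \<le> (8 + g) * ln (real n)" using gpos \<open>0 \<le> ln (real n)\<close>
        by (intro mult_right_mono) auto
      ultimately show ?thesis by simp
    qed
    then have "exp (- (g * K / 2)) \<le> exp (- (4 * ln (real n)))" by simp
    also have "exp (- (4 * ln (real n))) = 1 / real n ^ 4"
    proof -
      have "exp (4 * ln (real n)) = exp (ln (real n)) ^ 4" using exp_of_nat_mult[of 4 "ln (real n)"] by simp
      also have "\<dots> = real n ^ 4" using n0 by simp
      finally show ?thesis by (simp add: exp_minus inverse_eq_divide)
    qed
    finally have "exp (- (g * K / 2)) \<le> 1 / real n ^ 4" .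
    then show "(real n / c1) * exp (2 * c2) * exp (- (g * K / 2)) \<le> (real n / c1) * exp (2 * c2) * (1 / real n ^ 4)"
      using c n0 by (intro mult_left_mono) auto
  qed (use c n0 in auto)
  finally have "measure_pmf.prob ?M (- ?G) \<le> (real n + 1) * (real n / c1) * exp (2 * c2) / real n ^ 4"
    by simp
  moreover have "measure_pmf.prob ?M (- ?G) = 1 - measure_pmf.prob ?M ?G"
    using measure_pmf.prob_compl[of ?G ?M] by (simp add: Compl_eq_Diff_UNIV)
  ultimately show ?thesis by simp
qed


theorem lemma12:
  fixes c1 c2 :: real
  assumes "1 < c1" and "c1 < c2"
  shows "\<exists>chi l :: real. chi > 1 \<and> l > 1 \<and>
    (\<forall>d :: nat \<Rightarrow> real. (\<forall>n. c1 < d n \<and> d n < c2) \<longrightarrow>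
      (\<lambda>n. measure_pmf.prob (Gnp n (d n / real n))
          {E. \<forall>H. is_largest_component n E H \<longrightarrow>
                (\<forall>S. S \<subseteq> H \<and> induces_connected E S \<and>
                     chi * ln (real n) \<le> real (card S) \<and> card S \<le> card (core E H) \<longrightarrow>
                     real (card (S \<inter> core E H)) \<ge> real (card S) / l)})
      \<longlonglongrightarrow> 1)"
proof -
  define g where "g = gam c1"
  define s where "s = g / (2 * (3 + c2))"
  define th where "th = s^2"
  define l where "l = 2 / th"
  define chi where "chi = 8 / g + 1"
  have gpos: "0 < g" using gam_pos assms g_def by simp
  have gle: "g \<le> 1/24" using gam_le assms g_def by simp
  have spos: "0 < s" and sle: "s \<le> 1" using gpos gle assms by (auto simp: s_def field_simps)
  have thpos: "0 < th" and thle: "th < 1"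
  proof -
    show "0 < th" using spos by (simp add: th_def)
    have "s < 1" using gpos gle assms by (auto simp: s_def field_simps)
    then show "th < 1" using spos by (simp add: th_def power_less_one_iff abs_less_iff power2_less_1_iff)
  qed
  have l1: "1 < l" using thpos thle by (simp add: l_def field_simps)
  have chi1: "1 < chi" using gpos by (simp add: chi_def)
  define C where "C = 2 * exp (2 * c2) / c1"
  show ?thesis
  proof (intro exI conjI allI impI)
    show "1 < chi" by (rule chi1)
    show "1 < l" by (rule l1)
    fix d :: "nat \<Rightarrow> real" assume d: "\<forall>n. c1 < d n \<and> d n < c2"
    define t where "t = 2 / th / chi"
    have ev1: "eventually (\<lambda>n. 1 \<le> n) sequentially" by (rule eventually_ge_at_top)
    have ev2: "eventually (\<lambda>n. c2 \<le> real n) sequentially"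
      using eventually_ge_at_top[of "nat \<lceil>c2\<rceil>"] by eventually_elim linarith
    have ev3: "eventually (\<lambda>n. 2 / th \<le> chi * ln (real n)) sequentially"
      using eventually_ge_at_top[of "nat \<lceil>exp t\<rceil>"]
    proof eventually_elim
      case (elim n)
      then have "exp t \<le> real n" by linarith
      then have "t \<le> ln (real n)" by (metis exp_gt_zero ln_exp ln_le_cancel_iff order_less_le_trans)
      then have "chi * t \<le> chi * ln (real n)" using chi1 by (intro mult_left_mono) auto
      then show ?case using chi1 by (simp add: t_def)
    qed
    show "(\<lambda>n. measure_pmf.prob (Gnp n (d n / real n))
          {E. \<forall>H. is_largest_component n E H \<longrightarrow>
                (\<forall>S. S \<subseteq> H \<and> induces_connected E S \<and>
                     chi * ln (real n) \<le> real (card S) \<and> card S \<le> card (core E H) \<longrightarrow>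
                     real (card (S \<inter> core E H)) \<ge> real (card S) / l)})
      \<longlonglongrightarrow> 1"
    proof (rule tendsto_sandwich[of "\<lambda>n. 1 - C / real n" _ _ "\<lambda>n. 1"])
      show "eventually (\<lambda>n. 1 - C / real n \<le> measure_pmf.prob (Gnp n (d n / real n))
          {E. \<forall>H. is_largest_component n E H \<longrightarrow>
                (\<forall>S. S \<subseteq> H \<and> induces_connected E S \<and>
                     chi * ln (real n) \<le> real (card S) \<and> card S \<le> card (core E H) \<longrightarrow>
                     real (card (S \<inter> core E H)) \<ge> real (card S) / l)}) sequentially"
        using ev1 ev2 ev3
      proof eventually_elim
        case (elim n)
        have n0: "0 < real n" using elim by simp
        have B: "(real n + 1) * (real n / c1) * exp (2 * c2) / real n ^ 4 \<le> C / real n"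
        proof -
          have n1: "1 \<le> real n" using elim by simp
          have "(real n + 1) * real n \<le> (2 * real n) * real n" using n1 by (intro mult_right_mono) auto
          also have "\<dots> = 2 * real n ^ 2" by (simp add: power2_eq_square)
          also have "\<dots> \<le> 2 * real n ^ 3"
            using n1 by (intro mult_left_mono power_increasing) auto
          finally have "(real n + 1) * real n \<le> 2 * real n ^ 3" .
          then have "(real n + 1) * real n / real n ^ 4 \<le> 2 * real n ^ 3 / real n ^ 4"
            using n0 by (intro divide_right_mono) auto
          also have "2 * real n ^ 3 / real n ^ 4 = 2 / real n"
            using n0 by (simp add: field_simps power_Suc[symmetric] del: power_Suc)
          finally have "(real n + 1) * real n / real n ^ 4 \<le> 2 / real n" .
          then have "(real n + 1) * real n / real n ^ 4 * (exp (2 * c2) / c1) \<le> 2 / real n * (exp (2 * c2) / c1)"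
            using assms by (intro mult_right_mono) auto
          then show ?thesis by (simp add: C_def field_simps)
        qed
        have "1 - (real n + 1) * (real n / c1) * exp (2 * c2) / real n ^ 4 \<le>
            measure_pmf.prob (Gnp n (d n / real n))
          {E. \<forall>H. is_largest_component n E H \<longrightarrow>
                (\<forall>S. S \<subseteq> H \<and> induces_connected E S \<and>
                     chi * ln (real n) \<le> real (card S) \<and> card S \<le> card (core E H) \<longrightarrow>
                     real (card (S \<inter> core E H)) \<ge> real (card S) / l)}"
          by (rule per_n[OF assms(1,2) _ _ g_def s_def th_def l_def chi_def elim(1,2,3)]) (use d in auto)
        then show ?case using B by simp
      qed
      show "eventually (\<lambda>n. measure_pmf.prob (Gnp n (d n / real n))
          {E. \<forall>H. is_largest_component n E H \<longrightarrow>
                (\<forall>S. S \<subseteq> H \<and> induces_connected E S \<and>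
                     chi * ln (real n) \<le> real (card S) \<and> card S \<le> card (core E H) \<longrightarrow>
                     real (card (S \<inter> core E H)) \<ge> real (card S) / l)} \<le> 1) sequentially"
        by (simp add: measure_pmf.prob_le_1)
      show "(\<lambda>n. 1 - C / real n) \<longlonglongrightarrow> 1"
        using tendsto_diff[OF tendsto_const[of 1] lim_const_over_n[of C]] by simp
      show "(\<lambda>n. 1::real) \<longlonglongrightarrow> 1" by simp
    qed
  qed
qed


end
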